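(* Let $\mathcal{H}\subseteq\mathbb{R}^d$ be convex, let $\|\cdot\|$ be a norm on $\mathbb{R}^d$, let $(\mathcal{F}_t)_{t\ge0}$ be a filtration, and let $f_1,f_2,\dots$ be (not necessarily convex) differentiable random loss functions and $u,w_1,w_2,\dots$ random points of $\mathcal{H}$ such that: (1) $w_t$ is $\mathcal{F}_{t-1}$-measurable and $u$ is $\mathcal{F}_0$-measurable; (2) $f_t$ is $\mathcal{F}_t$-measurable and $\mathbb{E}[f_t\mid\mathcal{F}_{t-1}]$ is $\alpha$-strongly convex with respect to $\|\cdot\|$; (3) $f_t$ is almost surely $L$-Lipschitz with respect to $\|\cdot\|$ on $\mathcal{H}$. Then for any $\delta\in(0,1)$, with probability at least $1-\delta$, simultaneously for all $T\ge0$, $$\sum_{t=1}^T\big(f_t(w_t)-f_t(u)\big)\le\sum_{t=1}^T\Big((w_t-u)^\top\nabla f_t(w_t)-\frac{\alpha}{4}\|w_t-u\|^2\Big)+\frac{8L^2\log(1/\delta)}{\alpha}.$$ *)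

theory Defs
  imports "HOL-Probability.Probability"
begin

definition is_norm :: "('v::real_vector \<Rightarrow> real) \<Rightarrow> bool" where
  "is_norm N \<longleftrightarrow> (\<forall>x. N x = 0 \<longleftrightarrow> x = 0) \<and> (\<forall>c x. N (c *\<^sub>R x) = \<bar>c\<bar> * N x)
     \<and> (\<forall>x y. N (x + y) \<le> N x + N y)"

definition strongly_convex_wrt ::
    "'v::real_vector set \<Rightarrow> real \<Rightarrow> ('v \<Rightarrow> real) \<Rightarrow> ('v \<Rightarrow> real) \<Rightarrow> bool" where
  "strongly_convex_wrt H \<alpha> N \<phi> \<longleftrightarrow>
     (\<forall>x\<in>H. \<forall>y\<in>H. \<forall>\<theta>\<in>{0..1}.
        \<phi> (\<theta> *\<^sub>R x + (1 - \<theta>) *\<^sub>R y)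
          \<le> \<theta> * \<phi> x + (1 - \<theta>) * \<phi> y - \<alpha> / 2 * \<theta> * (1 - \<theta>) * (N (x - y))\<^sup>2)"

definition is_filtration :: "'a measure \<Rightarrow> (nat \<Rightarrow> 'a measure) \<Rightarrow> bool" where
  "is_filtration M F \<longleftrightarrow> (\<forall>t. subalgebra M (F t)) \<and> (\<forall>s t. s \<le> t \<longrightarrow> sets (F s) \<subseteq> sets (F t))"

end

theory Submission
  imports Defs
begin


primrec best :: "(nat \<Rightarrow> 'v::metric_space) \<Rightarrow> 'v \<Rightarrow> nat \<Rightarrow> nat" where
  "best q y 0 = 0"
| "best q y (Suc n) = (if dist (q (Suc n)) y < dist (q (best q y n)) y then Suc n else best q y n)"

lemma best_le: "best q y n \<le> n"
  by (induction n) auto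

lemma best_min: "k \<le> n \<Longrightarrow> dist (q (best q y n)) y \<le> dist (q k) y"
proof (induction n)
  case 0 then show ?case by simp
next
  case (Suc n)
  show ?case
  proof (cases "k = Suc n")
    case True then show ?thesis by auto
  next
    case False
    then have "dist (q (best q y n)) y \<le> dist (q k) y" using Suc by simp
    then show ?thesis by auto
  qed
qed

lemma best_tendsto:
  assumes "\<And>e. e > 0 \<Longrightarrow> \<exists>k. dist (q k) y < e"
  shows "(\<lambda>n. q (best q y n)) \<longlonglongrightarrow> y"
proof (rule tendstoI)
  fix e :: real assume "e > 0"
  then obtain k where k: "dist (q k) y < e" using assms by blast
  show "\<forall>\<^sub>F n in sequentially. dist (q (best q y n)) y < e"
    using eventually_ge_at_top[of k]
    by eventually_elim (use best_min[of k _ q y] k in \<open>force\<close>)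
qed

lemma best_meas:
  fixes x :: "'a \<Rightarrow> 'v::{metric_space, second_countable_topology}"
  assumes x: "x \<in> borel_measurable G"
  shows "(\<lambda>\<omega>. best q (x \<omega>) n) \<in> measurable G (count_space UNIV)"
proof (induction n)
  case 0 then show ?case by simp
next
  case (Suc n)
  have d: "(\<lambda>\<omega>. dist (q i) (x \<omega>)) \<in> borel_measurable G" for i
    by (rule borel_measurable_dist[OF measurable_const x]) simp
  have d2: "(\<lambda>\<omega>. dist (q (best q (x \<omega>) n)) (x \<omega>)) \<in> borel_measurable G"
    by (rule measurable_compose_countable[OF d Suc])
  have "{\<omega> \<in> space G. dist (q (Suc n)) (x \<omega>) < dist (q (best q (x \<omega>) n)) (x \<omega>)} \<in> sets G"
    by (rule borel_measurable_less[OF d[of "Suc n"] d2])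
  then show ?case using Suc by (simp add: measurable_If)
qed

lemma hoeff_det:
  fixes a b m l :: real
  assumes ab: "a < b" and am: "a \<le> m" and mb: "m \<le> b" and l: "l \<ge> 0"
  shows "((b - m) * exp (l * a) + (m - a) * exp (l * b)) / (b - a) \<le> exp (l * m + l\<^sup>2 * (b - a)\<^sup>2 / 8)"
proof -
  define d where "d = b - a"
  have d: "d > 0" using ab unfolding d_def by simp
  define p where "p = (m - a) / d"
  have p0: "p \<ge> 0" using am d unfolding p_def by simp
  define z where "z = l * d"
  have z0: "z \<ge> 0" using l d unfolding z_def by simp
  have la: "l * a = l * m - z * p" unfolding z_def p_def using d by (simp add: field_simps)
  have lb: "l * b = l * m - z * p + z" unfolding z_def p_def d_def using d by (simp add: field_simps d_def)
  have pos: "1 + p * (exp z - 1) > 0"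
    using p0 z0 by (smt (verit) mult_nonneg_nonneg one_le_exp_iff)
  have "((b - m) * exp (l * a) + (m - a) * exp (l * b)) / (b - a)
      = exp (l * m) * (exp (- z * p) * (1 + p * (exp z - 1)))"
  proof -
    define E1 where "E1 = exp (l * m)"
    define E2 where "E2 = exp (- z * p)"
    define E3 where "E3 = exp z"
    have ea: "exp (l * a) = E1 * E2" unfolding E1_def E2_def la by (subst exp_add[symmetric]) simp
    have eb: "exp (l * b) = E1 * E2 * E3" unfolding E1_def E2_def E3_def lb
      by (subst exp_add[symmetric])+ simp
    have "b - m = (1 - p) * d" "m - a = p * d" "b - a = d" unfolding p_def d_def using d by (auto simp: field_simps d_def)
    then have "((b - m) * exp (l * a) + (m - a) * exp (l * b)) / (b - a) = ((1 - p) * d * (E1 * E2) + p * d * (E1 * E2 * E3)) / d"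
      unfolding ea eb by simp
    also have "\<dots> = E1 * (E2 * (1 + p * (E3 - 1)))" using d by (simp add: field_simps)
    finally show ?thesis unfolding E1_def E2_def E3_def .
  qed
  also have "exp (- z * p) * (1 + p * (exp z - 1)) = exp (-z * p + ln (1 + p * (exp z - 1)))"
    using pos by (simp add: exp_add exp_diff exp_minus field_simps)
  also have "exp (l * m) * \<dots> = exp (l * m + (-z * p + ln (1 + p * (exp z - 1))))"
    by (simp add: exp_add)
  also have "\<dots> \<le> exp (l * m + z\<^sup>2 / 8)"
    using Hoeffdings_lemma_aux[OF z0 p0] by simp
  also have "z\<^sup>2 = l\<^sup>2 * (b - a)\<^sup>2" unfolding z_def d_def by (simp add: power_mult_distrib)
  finally show ?thesis .
qed

lemma exp_chord:
  fixes a b x l :: real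
  assumes ab: "a < b" and x: "a \<le> x" "x \<le> b" and l: "l \<ge> 0"
  shows "exp (l * x) \<le> ((b - x) * exp (l * a) + (x - a) * exp (l * b)) / (b - a)"
proof -
  define y where "y = (b - x) / (b - a)"
  have y: "y \<in> {0..1}" using x ab by (auto simp: y_def)
  have "exp (l * ((1 - y) *\<^sub>R b + y *\<^sub>R a)) \<le> (1 - y) * exp (l * b) + y * exp (l * a)"
    using y l by (intro convex_onD[OF convex_on_exp]) auto
  also have "(1 - y) *\<^sub>R b + y *\<^sub>R a = x"
    using ab by (simp add: y_def divide_simps) (simp add: algebra_simps)
  also have "(1 - y) * exp (l * b) + y * exp (l * a) = ((b - x) * exp (l * a) + (x - a) * exp (l * b)) / (b - a)"
  proof -
    have y1: "1 - y = (x - a) / (b - a)" using ab by (simp add: y_def field_simps)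
    show ?thesis unfolding y1 unfolding y_def by (simp add: add_divide_distrib ac_simps)
  qed
  finally show ?thesis .
qed

lemma chord_slope:
  fixes a b l :: real
  assumes ab: "a < b" and l: "l \<ge> 0"
  shows "0 \<le> (exp (l * b) - exp (l * a)) / (b - a)" "(exp (l * b) - exp (l * a)) / (b - a) \<le> l * exp (l * b)"
proof -
  show "0 \<le> (exp (l * b) - exp (l * a)) / (b - a)"
    using ab l by (intro divide_nonneg_pos) (auto intro: mult_left_mono)
  have "exp (l * a) = exp (l * b) * exp (l * (a - b))" by (simp add: exp_add[symmetric] algebra_simps)
  also have "\<dots> \<ge> exp (l * b) * (1 + l * (a - b))"
    by (intro mult_left_mono exp_ge_add_one_self) auto
  finally have "exp (l * b) - exp (l * a) \<le> l * exp (l * b) * (b - a)" by (simp add: algebra_simps)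
  then show "(exp (l * b) - exp (l * a)) / (b - a) \<le> l * exp (l * b)"
    using ab by (simp add: pos_divide_le_eq)
qed



locale L5 = prob_space M for M :: "'a measure" +
  fixes F :: "nat \<Rightarrow> 'a measure"
    and H :: "(real ^ 'd) set"
    and N :: "real ^ 'd \<Rightarrow> real"
    and f :: "nat \<Rightarrow> 'a \<Rightarrow> real ^ 'd \<Rightarrow> real"
    and grad :: "nat \<Rightarrow> 'a \<Rightarrow> real ^ 'd \<Rightarrow> real ^ 'd"
    and u :: "'a \<Rightarrow> real ^ 'd"
    and w :: "nat \<Rightarrow> 'a \<Rightarrow> real ^ 'd"
    and \<alpha> L :: real
  assumes filt: "is_filtration M F"
    and cvx: "convex H"
    and nrm: "is_norm N"
    and apos: "\<alpha> > 0"
    and deriv: "\<And>t \<omega> x. t \<ge> 1 \<Longrightarrow> \<omega> \<in> space M \<Longrightarrow>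
           (f t \<omega> has_derivative (\<lambda>h. grad t \<omega> x \<bullet> h)) (at x)"
    and u_meas: "u \<in> borel_measurable (F 0)"
    and uH: "\<And>\<omega>. \<omega> \<in> space M \<Longrightarrow> u \<omega> \<in> H"
    and w_meas: "\<And>t. t \<ge> 1 \<Longrightarrow> w t \<in> borel_measurable (F (t - 1))"
    and wH: "\<And>t \<omega>. t \<ge> 1 \<Longrightarrow> \<omega> \<in> space M \<Longrightarrow> w t \<omega> \<in> H"
    and f_meas: "\<And>t x. t \<ge> 1 \<Longrightarrow> (\<lambda>\<omega>. f t \<omega> x) \<in> borel_measurable (F t)"
    and f_int: "\<And>t x. t \<ge> 1 \<Longrightarrow> x \<in> H \<Longrightarrow> integrable M (\<lambda>\<omega>. f t \<omega> x)"
    and sc: "\<And>t. t \<ge> 1 \<Longrightarrow> \<exists>g :: 'a \<Rightarrow> real ^ 'd \<Rightarrow> real.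
           (\<forall>x\<in>H. (\<lambda>\<omega>. g \<omega> x) \<in> borel_measurable (F (t - 1))
                 \<and> (AE \<omega> in M. g \<omega> x = real_cond_exp M (F (t - 1)) (\<lambda>\<omega>'. f t \<omega>' x) \<omega>))
           \<and> (AE \<omega> in M. strongly_convex_wrt H \<alpha> N (g \<omega>))"
    and lip: "\<And>t. t \<ge> 1 \<Longrightarrow> AE \<omega> in M. \<forall>x\<in>H. \<forall>y\<in>H. \<bar>f t \<omega> x - f t \<omega> y\<bar> \<le> L * N (x - y)"
begin

lemma N_zero[simp]: "N 0 = 0" using nrm unfolding is_norm_def by auto
lemma N_scale: "N (c *\<^sub>R x) = \<bar>c\<bar> * N x" using nrm unfolding is_norm_def by auto
lemma N_tri: "N (x + y) \<le> N x + N y" using nrm unfolding is_norm_def by auto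
lemma N_minus: "N (- x) = N x" using N_scale[of "-1" x] by simp
lemma N_nonneg: "N x \<ge> 0"
proof -
  have "N 0 \<le> N x + N (- x)" using N_tri[of x "-x"] by simp
  then show ?thesis by (simp add: N_minus)
qed
lemma N_commute: "N (x - y) = N (y - x)" using N_minus[of "x - y"] by simp
lemma N_diff_le: "\<bar>N x - N y\<bar> \<le> N (x - y)"
  using N_tri[of "x - y" y] N_tri[of "y - x" x] N_commute[of x y] by auto
lemma N_sum: "N (sum g S) \<le> (\<Sum>i\<in>S. N (g i))"
proof (induction S rule: infinite_finite_induct)
  case (insert x F)
  then show ?case using N_tri[of "g x" "sum g F"] by simp
qed auto

definition "CN = (\<Sum>b\<in>(Basis::(real^'d) set). N b)"

lemma N_le_norm: "N x \<le> CN * norm x"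
proof -
  have "N x = N (\<Sum>b\<in>Basis. (x \<bullet> b) *\<^sub>R b)" by (simp add: euclidean_representation)
  also have "\<dots> \<le> (\<Sum>b\<in>Basis. \<bar>x \<bullet> b\<bar> * N b)" using N_sum[of "\<lambda>b. (x \<bullet> b) *\<^sub>R b" Basis] by (simp add: N_scale)
  also have "\<dots> \<le> (\<Sum>b\<in>(Basis::(real^'d) set). norm x * N b)"
    by (intro sum_mono mult_right_mono Basis_le_norm N_nonneg) auto
  finally show ?thesis by (simp add: CN_def sum_distrib_left mult.commute)
qed

lemma N_tendsto: assumes "X \<longlonglongrightarrow> x" shows "(\<lambda>n. N (X n)) \<longlonglongrightarrow> N x"
proof -
  have CN: "CN \<ge> 0" unfolding CN_def by (simp add: sum_nonneg N_nonneg)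
  have "(\<lambda>n. CN * norm (X n - x)) \<longlonglongrightarrow> CN * 0"
    by (intro tendsto_mult tendsto_const) (use assms in \<open>simp add: LIM_zero_iff tendsto_norm_zero\<close>)
  moreover have "norm (N (X n) - N x) \<le> CN * norm (X n - x)" for n
    using N_diff_le[of "X n" x] N_le_norm[of "X n - x"] by simp
  ultimately show ?thesis
    using Lim_null_comparison[of "\<lambda>n. N (X n) - N x" "\<lambda>n. CN * norm (X n - x)" sequentially]
    by (simp add: LIM_zero_iff always_eventually)
qed

lemma space_ne: "space M \<noteq> {}" using not_empty .
lemma H_ne: "H \<noteq> {}" using uH space_ne by blast

lemma subalgF: "subalgebra M (F t)" using filt unfolding is_filtration_def by auto
lemma F_mono: "s \<le> t \<Longrightarrow> sets (F s) \<subseteq> sets (F t)" using filt unfolding is_filtration_def by auto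
lemma meas_F_M: "g \<in> borel_measurable (F t) \<Longrightarrow> g \<in> borel_measurable M"
  using measurable_from_subalg[OF subalgF] .
lemma meas_F_mono: "s \<le> t \<Longrightarrow> g \<in> borel_measurable (F s) \<Longrightarrow> g \<in> borel_measurable (F t)"
  by (rule measurable_from_subalg[of "F t" "F s"])
     (use subalgF F_mono in \<open>auto simp: subalgebra_def\<close>)

lemma int_weight:
  fixes h V :: "'a \<Rightarrow> real" and B :: real
  assumes "integrable M h" "V \<in> borel_measurable M" "\<And>\<omega>. \<omega> \<in> space M \<Longrightarrow> \<bar>V \<omega>\<bar> \<le> B"
  shows "integrable M (\<lambda>\<omega>. V \<omega> * h \<omega>)"
proof (rule Bochner_Integration.integrable_bound[where f="\<lambda>\<omega>. B * h \<omega>"])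
  show "integrable M (\<lambda>\<omega>. B * h \<omega>)" using assms(1) by simp
  show "(\<lambda>\<omega>. V \<omega> * h \<omega>) \<in> borel_measurable M"
    using assms(1,2) by (simp add: borel_measurable_integrable)
  show "AE \<omega> in M. norm (V \<omega> * h \<omega>) \<le> norm (B * h \<omega>)"
  proof (rule AE_I2)
    fix \<omega> assume "\<omega> \<in> space M"
    then have "\<bar>V \<omega>\<bar> \<le> \<bar>B\<bar>" using assms(3) by force
    then show "norm (V \<omega> * h \<omega>) \<le> norm (B * h \<omega>)"
      by (simp add: abs_mult mult_right_mono)
  qed
qed

lemma int_bounded:
  fixes V :: "'a \<Rightarrow> real" and B :: real
  assumes "V \<in> borel_measurable M" "\<And>\<omega>. \<omega> \<in> space M \<Longrightarrow> \<bar>V \<omega>\<bar> \<le> B"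
  shows "integrable M V"
  using assms by (intro integrable_const_bound[where B=B]) auto

lemma cond_sc:
  fixes V :: "'a \<Rightarrow> real" and B \<theta> :: real
  assumes t: "t \<ge> 1" and a: "a \<in> H" and b: "b \<in> H" and th: "0 \<le> \<theta>" "\<theta> \<le> 1"
    and V: "V \<in> borel_measurable (F (t-1))" and Vb: "\<And>\<omega>. \<omega> \<in> space M \<Longrightarrow> 0 \<le> V \<omega> \<and> V \<omega> \<le> B"
  shows "(\<integral>\<omega>. V \<omega> * f t \<omega> (\<theta> *\<^sub>R a + (1-\<theta>) *\<^sub>R b) \<partial>M)
     \<le> \<theta> * (\<integral>\<omega>. V \<omega> * f t \<omega> a \<partial>M) + (1-\<theta>) * (\<integral>\<omega>. V \<omega> * f t \<omega> b \<partial>M)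
        - \<alpha>/2*\<theta>*(1-\<theta>)*(N (a-b))\<^sup>2 * (\<integral>\<omega>. V \<omega> \<partial>M)"
proof -
  obtain g :: "'a \<Rightarrow> real ^ 'd \<Rightarrow> real" where
    g1: "\<And>x. x\<in>H \<Longrightarrow> (\<lambda>\<omega>. g \<omega> x) \<in> borel_measurable (F (t - 1))"
    and g2: "\<And>x. x\<in>H \<Longrightarrow> (AE \<omega> in M. g \<omega> x = real_cond_exp M (F (t - 1)) (\<lambda>\<omega>'. f t \<omega>' x) \<omega>)"
    and g3: "AE \<omega> in M. strongly_convex_wrt H \<alpha> N (g \<omega>)"
    using sc[OF t] by blast
  interpret S: finite_measure_subalgebra M "F (t-1)"
    by unfold_locales (rule subalgF)
  have VM: "V \<in> borel_measurable M" using meas_F_M[OF V] .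
  have Vabs: "\<And>\<omega>. \<omega> \<in> space M \<Longrightarrow> \<bar>V \<omega>\<bar> \<le> B" using Vb by force
  define m where "m = \<theta> *\<^sub>R a + (1-\<theta>) *\<^sub>R b"
  have mH: "m \<in> H" unfolding m_def using cvx a b th by (intro convexD) auto
  have key: "integrable M (\<lambda>\<omega>. V \<omega> * g \<omega> z) \<and> (\<integral>\<omega>. V \<omega> * f t \<omega> z \<partial>M) = (\<integral>\<omega>. V \<omega> * g \<omega> z \<partial>M)"
    if z: "z \<in> H" for z
  proof -
    have fz: "integrable M (\<lambda>\<omega>. f t \<omega> z)" using f_int[OF t z] .
    have i1: "integrable M (\<lambda>\<omega>. V \<omega> * f t \<omega> z)" by (rule int_weight[OF fz VM Vabs])
    have fzM: "(\<lambda>\<omega>. f t \<omega> z) \<in> borel_measurable M" using fz by (simp add: borel_measurable_integrable)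
    have c1: "integrable M (\<lambda>\<omega>. V \<omega> * real_cond_exp M (F (t-1)) (\<lambda>\<omega>'. f t \<omega>' z) \<omega>)"
      and c2: "(\<integral>\<omega>. V \<omega> * real_cond_exp M (F (t-1)) (\<lambda>\<omega>'. f t \<omega>' z) \<omega> \<partial>M) = (\<integral>\<omega>. V \<omega> * f t \<omega> z \<partial>M)"
      using S.real_cond_exp_intg[OF i1 V fzM] by auto
    have ae: "AE \<omega> in M. V \<omega> * real_cond_exp M (F (t-1)) (\<lambda>\<omega>'. f t \<omega>' z) \<omega> = V \<omega> * g \<omega> z"
      using g2[OF z] by eventually_elim simp
    have gM: "(\<lambda>\<omega>. V \<omega> * g \<omega> z) \<in> borel_measurable M"
      using VM meas_F_M[OF g1[OF z]] by simp
    have "integrable M (\<lambda>\<omega>. V \<omega> * g \<omega> z)"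
      using integrable_cong_AE_imp[OF c1 gM ae] .
    moreover have "(\<integral>\<omega>. V \<omega> * g \<omega> z \<partial>M) = (\<integral>\<omega>. V \<omega> * f t \<omega> z \<partial>M)"
      using c2 integral_cong_AE[OF _ gM ae] VM borel_measurable_cond_exp2 by simp
    ultimately show ?thesis by simp
  qed
  have iV: "integrable M V" by (rule int_bounded[OF VM Vabs])
  have "(\<integral>\<omega>. V \<omega> * f t \<omega> m \<partial>M) = (\<integral>\<omega>. V \<omega> * g \<omega> m \<partial>M)" using key[OF mH] by simp
  also have "\<dots> \<le> (\<integral>\<omega>. \<theta> * (V \<omega> * g \<omega> a) + (1-\<theta>) * (V \<omega> * g \<omega> b) - (\<alpha>/2*\<theta>*(1-\<theta>)*(N (a-b))\<^sup>2) * V \<omega> \<partial>M)"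
  proof (rule integral_mono_AE)
    show "integrable M (\<lambda>\<omega>. V \<omega> * g \<omega> m)" using key[OF mH] by simp
    show "integrable M (\<lambda>\<omega>. \<theta> * (V \<omega> * g \<omega> a) + (1-\<theta>) * (V \<omega> * g \<omega> b) - (\<alpha>/2*\<theta>*(1-\<theta>)*(N (a-b))\<^sup>2) * V \<omega>)"
      using key[OF a] key[OF b] iV by auto
    show "AE \<omega> in M. V \<omega> * g \<omega> m \<le> \<theta> * (V \<omega> * g \<omega> a) + (1-\<theta>) * (V \<omega> * g \<omega> b) - (\<alpha>/2*\<theta>*(1-\<theta>)*(N (a-b))\<^sup>2) * V \<omega>"
      using g3
    proof (rule AE_mp, intro AE_I2 impI)
      fix \<omega> assume om: "\<omega> \<in> space M" and scw: "strongly_convex_wrt H \<alpha> N (g \<omega>)"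
      have "g \<omega> m \<le> \<theta> * g \<omega> a + (1 - \<theta>) * g \<omega> b - \<alpha> / 2 * \<theta> * (1 - \<theta>) * (N (a - b))\<^sup>2"
        using scw a b th unfolding strongly_convex_wrt_def m_def by auto
      from mult_left_mono[OF this, of "V \<omega>"] Vb[OF om]
      show "V \<omega> * g \<omega> m \<le> \<theta> * (V \<omega> * g \<omega> a) + (1-\<theta>) * (V \<omega> * g \<omega> b) - (\<alpha>/2*\<theta>*(1-\<theta>)*(N (a-b))\<^sup>2) * V \<omega>"
        by (simp add: algebra_simps)
    qed
  qed
  also have "\<dots> = \<theta> * (\<integral>\<omega>. V \<omega> * g \<omega> a \<partial>M) + (1-\<theta>) * (\<integral>\<omega>. V \<omega> * g \<omega> b \<partial>M) - (\<alpha>/2*\<theta>*(1-\<theta>)*(N (a-b))\<^sup>2) * (\<integral>\<omega>. V \<omega> \<partial>M)"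
    using key[OF a] key[OF b] iV by simp
  also have "\<dots> = \<theta> * (\<integral>\<omega>. V \<omega> * f t \<omega> a \<partial>M) + (1-\<theta>) * (\<integral>\<omega>. V \<omega> * f t \<omega> b \<partial>M) - (\<alpha>/2*\<theta>*(1-\<theta>)*(N (a-b))\<^sup>2) * (\<integral>\<omega>. V \<omega> \<partial>M)"
    using key[OF a] key[OF b] by simp
  finally show ?thesis unfolding m_def by simp
qed

definition "D = 4 * max L 0 / \<alpha>"

lemma diam_aux:
  assumes a: "a \<in> H" and b: "b \<in> H"
  shows "\<alpha>/8 * (N (a-b))\<^sup>2 \<le> L/2 * N (a - b)"
proof -
  define m where "m = (1/2::real) *\<^sub>R a + (1 - 1/2) *\<^sub>R b"
  have mH: "m \<in> H" unfolding m_def using cvx a b by (intro convexD) auto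
  have c: "(\<integral>\<omega>. 1 * f 1 \<omega> m \<partial>M)
     \<le> 1/2 * (\<integral>\<omega>. 1 * f 1 \<omega> a \<partial>M) + (1-1/2) * (\<integral>\<omega>. 1 * f 1 \<omega> b \<partial>M)
        - \<alpha>/2*(1/2)*(1-1/2)*(N (a-b))\<^sup>2 * (\<integral>\<omega>. 1 \<partial>M)"
    unfolding m_def by (rule cond_sc[where B=1]) (use a b in auto)
  have am: "a - m = (1/2::real) *\<^sub>R (a - b)" unfolding m_def by (simp add: vec_eq_iff field_simps)
  have bm: "b - m = (-1/2::real) *\<^sub>R (a - b)" unfolding m_def by (simp add: vec_eq_iff field_simps)
  have Nam: "N (a - m) = N (a - b) / 2" using am N_scale by simp
  have Nbm: "N (b - m) = N (a - b) / 2" by (simp only: bm N_scale)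
  have ia: "integrable M (\<lambda>\<omega>. f 1 \<omega> a)" "integrable M (\<lambda>\<omega>. f 1 \<omega> b)" "integrable M (\<lambda>\<omega>. f 1 \<omega> m)"
    using f_int a b mH by auto
  have "(\<integral>\<omega>. 1/2 * f 1 \<omega> a + 1/2 * f 1 \<omega> b - f 1 \<omega> m \<partial>M) \<le> (\<integral>\<omega>. L/2 * N (a - b) \<partial>M)"
  proof (rule integral_mono_AE)
    show "integrable M (\<lambda>\<omega>. 1/2 * f 1 \<omega> a + 1/2 * f 1 \<omega> b - f 1 \<omega> m)" using ia by auto
    show "AE \<omega> in M. 1/2 * f 1 \<omega> a + 1/2 * f 1 \<omega> b - f 1 \<omega> m \<le> L/2 * N (a - b)"
      using lip[OF order_refl]
    proof eventually_elim
      case (elim \<omega>)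
      then have "\<bar>f 1 \<omega> a - f 1 \<omega> m\<bar> \<le> L * N (a - m)" "\<bar>f 1 \<omega> b - f 1 \<omega> m\<bar> \<le> L * N (b - m)"
        using a b mH by auto
      then show ?case unfolding Nam Nbm abs_le_iff by (simp add: field_simps)
    qed
  qed simp
  then have "1/2 * (\<integral>\<omega>. f 1 \<omega> a \<partial>M) + 1/2 * (\<integral>\<omega>. f 1 \<omega> b \<partial>M) - (\<integral>\<omega>. f 1 \<omega> m \<partial>M) \<le> L/2 * N (a - b)"
    using ia by (simp add: prob_space)
  with c show ?thesis by (simp add: prob_space)
qed

lemma D_nonneg: "D \<ge> 0" unfolding D_def using apos by simp

lemma diam:
  assumes a: "a \<in> H" and b: "b \<in> H"
  shows "N (a-b) \<le> D"
proof (cases "N (a - b) = 0")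
  case True then show ?thesis using D_nonneg by simp
next
  case False
  then have pos: "N (a - b) > 0" using N_nonneg[of "a-b"] by simp
  have "\<alpha>/8 * N (a-b) * N (a - b) \<le> L/2 * N (a - b)"
    using diam_aux[OF a b] by (simp add: power2_eq_square)
  then have "\<alpha>/8 * N (a-b) \<le> L/2" using pos by simp
  then show ?thesis unfolding D_def using apos by (simp add: field_simps)
qed

lemma L_pos_if:
  assumes a: "a \<in> H" and b: "b \<in> H" and ne: "a \<noteq> b"
  shows "L > 0"
proof -
  have pos: "N (a - b) > 0" using N_nonneg[of "a-b"] ne nrm unfolding is_norm_def by (metis eq_iff_diff_eq_0 less_eq_real_def)
  have "\<alpha>/8 * N (a-b) * N (a - b) \<le> L/2 * N (a - b)"
    using diam_aux[OF a b] by (simp add: power2_eq_square)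
  then have "\<alpha>/8 * N (a-b) \<le> L/2" using pos by simp
  moreover have "\<alpha>/8 * N (a-b) > 0" using apos pos by simp
  ultimately show ?thesis by linarith
qed

lemma N_cont: "continuous_on UNIV N"
  by (intro continuous_at_imp_continuous_on ballI continuous_at_sequentiallyI N_tendsto)

lemma N_borel: "N \<in> borel_measurable borel"
  by (rule borel_measurable_continuous_onI[OF N_cont])

lemma space_F: "space (F t) = space M" using subalgF unfolding subalgebra_def by auto

definition "TT = (SOME T. countable T \<and> T \<subseteq> H \<and> H \<subseteq> closure T)"

lemma TT: "countable TT" "TT \<subseteq> H" "H \<subseteq> closure TT"
proof -
  have "\<exists>T. countable T \<and> T \<subseteq> H \<and> H \<subseteq> closure T" by (metis separable)
  then have "countable TT \<and> TT \<subseteq> H \<and> H \<subseteq> closure TT" unfolding TT_def by (rule someI_ex)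
  then show "countable TT" "TT \<subseteq> H" "H \<subseteq> closure TT" by auto
qed

lemma TT_ne: "TT \<noteq> {}" using TT(3) H_ne by auto

definition "qs = from_nat_into TT"

lemma qs_H: "qs n \<in> H" unfolding qs_def using from_nat_into[OF TT_ne] TT(2) by auto

lemma qs_dense: assumes "y \<in> H" "e > 0" shows "\<exists>k. dist (qs k) y < e"
proof -
  obtain z where z: "z \<in> TT" "dist z y < e" using TT(3) assms closure_approachable by blast
  obtain k where "from_nat_into TT k = z" using from_nat_into_surj[OF TT(1) z(1)] by blast
  then show ?thesis using z unfolding qs_def by auto
qed

lemma approx_tendsto: "y \<in> H \<Longrightarrow> (\<lambda>n. qs (best qs y n)) \<longlonglongrightarrow> y"
  by (rule best_tendsto) (rule qs_dense)

lemma f_cont: "t \<ge> 1 \<Longrightarrow> \<omega> \<in> space M \<Longrightarrow> isCont (f t \<omega>) x"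
  using has_derivative_continuous[OF deriv] by blast

lemma rand_meas:
  assumes t: "t \<ge> 1" and z: "z \<in> borel_measurable (F s)" and zH: "\<And>\<omega>. \<omega> \<in> space M \<Longrightarrow> z \<omega> \<in> H"
    and st: "s \<le> t"
  shows "(\<lambda>\<omega>. f t \<omega> (z \<omega>)) \<in> borel_measurable (F t)"
proof (rule borel_measurable_LIMSEQ_real)
  have zt: "z \<in> borel_measurable (F t)" using meas_F_mono[OF st z] .
  show "(\<lambda>\<omega>. f t \<omega> (qs (best qs (z \<omega>) n))) \<in> borel_measurable (F t)" for n
    by (rule measurable_compose_countable[where f="\<lambda>i \<omega>. f t \<omega> (qs i)", OF f_meas[OF t] best_meas[OF zt]])
  show "(\<lambda>n. f t \<omega> (qs (best qs (z \<omega>) n))) \<longlonglongrightarrow> f t \<omega> (z \<omega>)" if "\<omega> \<in> space (F t)" for \<omega>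
    using that space_F zH approx_tendsto f_cont[OF t] isCont_tendsto_compose by metis
qed

lemma decomp:
  fixes V :: "'a \<Rightarrow> real" and i j :: "'a \<Rightarrow> nat" and h :: "nat \<Rightarrow> nat \<Rightarrow> 'a \<Rightarrow> real"
  assumes ij: "\<And>\<omega>. \<omega> \<in> space M \<Longrightarrow> i \<omega> \<le> n \<and> j \<omega> \<le> n"
    and hi: "\<And>k l. integrable M (\<lambda>\<omega>. (if i \<omega> = k \<and> j \<omega> = l then V \<omega> else 0) * h k l \<omega>)"
  shows "(\<integral>\<omega>. V \<omega> * h (i \<omega>) (j \<omega>) \<omega> \<partial>M)
       = (\<Sum>p\<in>{..n}\<times>{..n}. \<integral>\<omega>. (if i \<omega> = fst p \<and> j \<omega> = snd p then V \<omega> else 0) * h (fst p) (snd p) \<omega> \<partial>M)"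
proof -
  have "(\<Sum>p\<in>{..n}\<times>{..n}. \<integral>\<omega>. (if i \<omega> = fst p \<and> j \<omega> = snd p then V \<omega> else 0) * h (fst p) (snd p) \<omega> \<partial>M)
      = (\<integral>\<omega>. (\<Sum>p\<in>{..n}\<times>{..n}. (if i \<omega> = fst p \<and> j \<omega> = snd p then V \<omega> else 0) * h (fst p) (snd p) \<omega>) \<partial>M)"
    using Bochner_Integration.integral_sum[where I="{..n}\<times>{..n}" and f="\<lambda>p \<omega>. (if i \<omega> = fst p \<and> j \<omega> = snd p then V \<omega> else 0) * h (fst p) (snd p) \<omega>"] hi
    by simp
  also have "\<dots> = (\<integral>\<omega>. V \<omega> * h (i \<omega>) (j \<omega>) \<omega> \<partial>M)"
  proof (rule Bochner_Integration.integral_cong[OF refl])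
    fix \<omega> assume om: "\<omega> \<in> space M"
    have "(\<Sum>p\<in>{..n}\<times>{..n}. (if i \<omega> = fst p \<and> j \<omega> = snd p then V \<omega> else 0) * h (fst p) (snd p) \<omega>)
        = (\<Sum>p\<in>{..n}\<times>{..n}. if p = (i \<omega>, j \<omega>) then V \<omega> * h (fst p) (snd p) \<omega> else 0)"
      by (intro sum.cong refl) auto
    also have "\<dots> = V \<omega> * h (i \<omega>) (j \<omega>) \<omega>"
      using ij[OF om] by (subst sum.delta) auto
    finally show "(\<Sum>p\<in>{..n}\<times>{..n}. (if i \<omega> = fst p \<and> j \<omega> = snd p then V \<omega> else 0) * h (fst p) (snd p) \<omega>)
        = V \<omega> * h (i \<omega>) (j \<omega>) \<omega>" .
  qed
  finally show ?thesis by simp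
qed

lemma cond_sc_fin:
  fixes V :: "'a \<Rightarrow> real" and B \<theta> :: real and i j :: "'a \<Rightarrow> nat"
  assumes t: "t \<ge> 1" and th: "0 \<le> \<theta>" "\<theta> \<le> 1"
    and im: "i \<in> measurable (F (t-1)) (count_space UNIV)" and jm: "j \<in> measurable (F (t-1)) (count_space UNIV)"
    and ij: "\<And>\<omega>. \<omega> \<in> space M \<Longrightarrow> i \<omega> \<le> n \<and> j \<omega> \<le> n"
    and V: "V \<in> borel_measurable (F (t-1))" and Vb: "\<And>\<omega>. \<omega> \<in> space M \<Longrightarrow> 0 \<le> V \<omega> \<and> V \<omega> \<le> B"
  shows "(\<integral>\<omega>. V \<omega> * f t \<omega> (\<theta> *\<^sub>R qs (i \<omega>) + (1-\<theta>) *\<^sub>R qs (j \<omega>)) \<partial>M)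
     \<le> \<theta> * (\<integral>\<omega>. V \<omega> * f t \<omega> (qs (i \<omega>)) \<partial>M) + (1-\<theta>) * (\<integral>\<omega>. V \<omega> * f t \<omega> (qs (j \<omega>)) \<partial>M)
        - \<alpha>/2*\<theta>*(1-\<theta>) * (\<integral>\<omega>. V \<omega> * (N (qs (i \<omega>) - qs (j \<omega>)))\<^sup>2 \<partial>M)"
proof -
  define Vp where "Vp = (\<lambda>(k::nat) (l::nat) \<omega>. if i \<omega> = k \<and> j \<omega> = l then V \<omega> else 0)"
  have Vpm: "Vp k l \<in> borel_measurable (F (t-1))" for k l
  proof -
    have "{\<omega> \<in> space (F (t-1)). i \<omega> = k \<and> j \<omega> = l} = (i -` {k} \<inter> space (F (t-1))) \<inter> (j -` {l} \<inter> space (F (t-1)))"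
      by auto
    also have "\<dots> \<in> sets (F (t-1))"
      using measurable_sets[OF im, of "{k}"] measurable_sets[OF jm, of "{l}"] by auto
    finally show ?thesis unfolding Vp_def by (intro measurable_If V measurable_const) auto
  qed
  have Vpb: "\<omega> \<in> space M \<Longrightarrow> 0 \<le> Vp k l \<omega> \<and> Vp k l \<omega> \<le> B" for k l \<omega>
    using Vb[of \<omega>] unfolding Vp_def by auto
  have VpM: "Vp k l \<in> borel_measurable M" for k l using meas_F_M[OF Vpm] .
  have Vpa: "\<omega> \<in> space M \<Longrightarrow> \<bar>Vp k l \<omega>\<bar> \<le> B" for k l \<omega> using Vpb[of \<omega> k l] by auto
  have intf: "integrable M (\<lambda>\<omega>. Vp k l \<omega> * f t \<omega> z)" if "z \<in> H" for k l z
    by (rule int_weight[OF f_int[OF t that] VpM Vpa])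
  have intf2: "integrable M (\<lambda>\<omega>. (if i \<omega> = k \<and> j \<omega> = l then V \<omega> else 0) * f t \<omega> z)" if "z \<in> H" for k l z
    using intf[OF that, of k l] unfolding Vp_def .
  have cH: "\<theta> *\<^sub>R qs k + (1-\<theta>) *\<^sub>R qs l \<in> H" for k l
    using cvx qs_H th by (intro convexD) auto
  define c where "c = \<alpha>/2*\<theta>*(1-\<theta>)"
  let ?S = "{..n}\<times>{..n}"
  have "(\<integral>\<omega>. V \<omega> * f t \<omega> (\<theta> *\<^sub>R qs (i \<omega>) + (1-\<theta>) *\<^sub>R qs (j \<omega>)) \<partial>M)
      = (\<Sum>p\<in>?S. \<integral>\<omega>. Vp (fst p) (snd p) \<omega> * f t \<omega> (\<theta> *\<^sub>R qs (fst p) + (1-\<theta>) *\<^sub>R qs (snd p)) \<partial>M)"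
    unfolding Vp_def
    by (rule decomp[where h="\<lambda>k l \<omega>. f t \<omega> (\<theta> *\<^sub>R qs k + (1-\<theta>) *\<^sub>R qs l)"])
       (auto intro: intf2 cH dest: ij)
  also have "\<dots> \<le> (\<Sum>p\<in>?S. \<theta> * (\<integral>\<omega>. Vp (fst p) (snd p) \<omega> * f t \<omega> (qs (fst p)) \<partial>M)
        + (1-\<theta>) * (\<integral>\<omega>. Vp (fst p) (snd p) \<omega> * f t \<omega> (qs (snd p)) \<partial>M)
        - c * (\<integral>\<omega>. Vp (fst p) (snd p) \<omega> * (N (qs (fst p) - qs (snd p)))\<^sup>2 \<partial>M))"
  proof (rule sum_mono)
    fix p assume "p \<in> ?S"
    have "(\<integral>\<omega>. Vp (fst p) (snd p) \<omega> * (N (qs (fst p) - qs (snd p)))\<^sup>2 \<partial>M)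
        = (N (qs (fst p) - qs (snd p)))\<^sup>2 * (\<integral>\<omega>. Vp (fst p) (snd p) \<omega> \<partial>M)"
      by (simp add: mult.commute)
    then show "(\<integral>\<omega>. Vp (fst p) (snd p) \<omega> * f t \<omega> (\<theta> *\<^sub>R qs (fst p) + (1-\<theta>) *\<^sub>R qs (snd p)) \<partial>M)
       \<le> \<theta> * (\<integral>\<omega>. Vp (fst p) (snd p) \<omega> * f t \<omega> (qs (fst p)) \<partial>M)
        + (1-\<theta>) * (\<integral>\<omega>. Vp (fst p) (snd p) \<omega> * f t \<omega> (qs (snd p)) \<partial>M)
        - c * (\<integral>\<omega>. Vp (fst p) (snd p) \<omega> * (N (qs (fst p) - qs (snd p)))\<^sup>2 \<partial>M)"
    proof -
      have "(\<integral>\<omega>. Vp (fst p) (snd p) \<omega> * f t \<omega> (\<theta> *\<^sub>R qs (fst p) + (1-\<theta>) *\<^sub>R qs (snd p)) \<partial>M)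
       \<le> \<theta> * (\<integral>\<omega>. Vp (fst p) (snd p) \<omega> * f t \<omega> (qs (fst p)) \<partial>M)
        + (1-\<theta>) * (\<integral>\<omega>. Vp (fst p) (snd p) \<omega> * f t \<omega> (qs (snd p)) \<partial>M)
        - \<alpha>/2*\<theta>*(1-\<theta>)*(N (qs (fst p) - qs (snd p)))\<^sup>2 * (\<integral>\<omega>. Vp (fst p) (snd p) \<omega> \<partial>M)"
        by (rule cond_sc[OF t qs_H qs_H th Vpm Vpb])
      moreover have "\<alpha>/2*\<theta>*(1-\<theta>)*(N (qs (fst p) - qs (snd p)))\<^sup>2 * (\<integral>\<omega>. Vp (fst p) (snd p) \<omega> \<partial>M)
          = c * (\<integral>\<omega>. Vp (fst p) (snd p) \<omega> * (N (qs (fst p) - qs (snd p)))\<^sup>2 \<partial>M)"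
        unfolding c_def \<open>(\<integral>\<omega>. Vp (fst p) (snd p) \<omega> * (N (qs (fst p) - qs (snd p)))\<^sup>2 \<partial>M)
        = (N (qs (fst p) - qs (snd p)))\<^sup>2 * (\<integral>\<omega>. Vp (fst p) (snd p) \<omega> \<partial>M)\<close> by (simp add: mult_ac)
      ultimately show ?thesis by linarith
    qed
  qed
  also have "\<dots> = \<theta> * (\<Sum>p\<in>?S. \<integral>\<omega>. Vp (fst p) (snd p) \<omega> * f t \<omega> (qs (fst p)) \<partial>M)
        + (1-\<theta>) * (\<Sum>p\<in>?S. \<integral>\<omega>. Vp (fst p) (snd p) \<omega> * f t \<omega> (qs (snd p)) \<partial>M)
        - c * (\<Sum>p\<in>?S. \<integral>\<omega>. Vp (fst p) (snd p) \<omega> * (N (qs (fst p) - qs (snd p)))\<^sup>2 \<partial>M)"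
    by (simp add: sum_distrib_left sum.distrib sum_subtractf)
  also have "(\<Sum>p\<in>?S. \<integral>\<omega>. Vp (fst p) (snd p) \<omega> * f t \<omega> (qs (fst p)) \<partial>M) = (\<integral>\<omega>. V \<omega> * f t \<omega> (qs (i \<omega>)) \<partial>M)"
    unfolding Vp_def
    by (rule decomp[where h="\<lambda>k l \<omega>. f t \<omega> (qs k)", symmetric])
       (auto intro: intf2 qs_H dest: ij)
  also have "(\<Sum>p\<in>?S. \<integral>\<omega>. Vp (fst p) (snd p) \<omega> * f t \<omega> (qs (snd p)) \<partial>M) = (\<integral>\<omega>. V \<omega> * f t \<omega> (qs (j \<omega>)) \<partial>M)"
    unfolding Vp_def
    by (rule decomp[where h="\<lambda>k l \<omega>. f t \<omega> (qs l)", symmetric])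
       (auto intro: intf2 qs_H dest: ij)
  also have "(\<Sum>p\<in>?S. \<integral>\<omega>. Vp (fst p) (snd p) \<omega> * (N (qs (fst p) - qs (snd p)))\<^sup>2 \<partial>M)
      = (\<integral>\<omega>. V \<omega> * (N (qs (i \<omega>) - qs (j \<omega>)))\<^sup>2 \<partial>M)"
    unfolding Vp_def
    by (rule decomp[where h="\<lambda>k l \<omega>. (N (qs k - qs l))\<^sup>2", symmetric])
       (use int_bounded[OF VpM Vpa] ij in \<open>auto simp add: Vp_def\<close>)
  finally show ?thesis unfolding c_def by simp
qed

lemma f_bound:
  assumes t: "t \<ge> 1"
  shows "AE \<omega> in M. \<forall>z\<in>H. \<bar>f t \<omega> z\<bar> \<le> \<bar>f t \<omega> (qs 0)\<bar> + \<bar>L\<bar> * D"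
  using lip[OF t]
proof eventually_elim
  case (elim \<omega>)
  show ?case
  proof
    fix z assume z: "z \<in> H"
    have "\<bar>f t \<omega> z - f t \<omega> (qs 0)\<bar> \<le> L * N (z - qs 0)" using elim z qs_H by auto
    also have "\<dots> \<le> \<bar>L\<bar> * N (z - qs 0)" using N_nonneg by (simp add: mult_right_mono)
    also have "\<dots> \<le> \<bar>L\<bar> * D" using diam[OF z qs_H] by (simp add: mult_left_mono)
    finally show "\<bar>f t \<omega> z\<bar> \<le> \<bar>f t \<omega> (qs 0)\<bar> + \<bar>L\<bar> * D" by linarith
  qed
qed

lemma lim_f:
  fixes V :: "'a \<Rightarrow> real" and B :: real
  assumes t: "t \<ge> 1" and zn: "\<And>n. zn n \<in> borel_measurable (F (t-1))"
    and znH: "\<And>n \<omega>. \<omega> \<in> space M \<Longrightarrow> zn n \<omega> \<in> H"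
    and z: "z \<in> borel_measurable (F (t-1))" and zH: "\<And>\<omega>. \<omega> \<in> space M \<Longrightarrow> z \<omega> \<in> H"
    and conv: "\<And>\<omega>. \<omega> \<in> space M \<Longrightarrow> (\<lambda>n. zn n \<omega>) \<longlonglongrightarrow> z \<omega>"
    and V: "V \<in> borel_measurable M" and Vb: "\<And>\<omega>. \<omega> \<in> space M \<Longrightarrow> \<bar>V \<omega>\<bar> \<le> B"
  shows "(\<lambda>n. \<integral>\<omega>. V \<omega> * f t \<omega> (zn n \<omega>) \<partial>M) \<longlonglongrightarrow> (\<integral>\<omega>. V \<omega> * f t \<omega> (z \<omega>) \<partial>M)"
proof (rule integral_dominated_convergence[where w="\<lambda>\<omega>. B * (\<bar>f t \<omega> (qs 0)\<bar> + \<bar>L\<bar> * D)"])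
  have st: "t - 1 \<le> t" by simp
  show "(\<lambda>\<omega>. V \<omega> * f t \<omega> (z \<omega>)) \<in> borel_measurable M"
    using V meas_F_M[OF rand_meas[OF t z zH st]] by simp
  show "(\<lambda>\<omega>. V \<omega> * f t \<omega> (zn n \<omega>)) \<in> borel_measurable M" for n
    using V meas_F_M[OF rand_meas[OF t zn znH st]] by simp
  show "integrable M (\<lambda>\<omega>. B * (\<bar>f t \<omega> (qs 0)\<bar> + \<bar>L\<bar> * D))"
    using f_int[OF t qs_H] by auto
  show "AE \<omega> in M. (\<lambda>n. V \<omega> * f t \<omega> (zn n \<omega>)) \<longlonglongrightarrow> V \<omega> * f t \<omega> (z \<omega>)"
  proof (rule AE_I2)
    fix \<omega> assume om: "\<omega> \<in> space M"
    show "(\<lambda>n. V \<omega> * f t \<omega> (zn n \<omega>)) \<longlonglongrightarrow> V \<omega> * f t \<omega> (z \<omega>)"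
      by (intro tendsto_mult_left isCont_tendsto_compose[OF f_cont[OF t om]] conv om)
  qed
  show "AE \<omega> in M. norm (V \<omega> * f t \<omega> (zn n \<omega>)) \<le> B * (\<bar>f t \<omega> (qs 0)\<bar> + \<bar>L\<bar> * D)" for n
    using f_bound[OF t]
  proof (rule AE_mp, intro AE_I2 impI)
    fix \<omega> assume om: "\<omega> \<in> space M" and b: "\<forall>z\<in>H. \<bar>f t \<omega> z\<bar> \<le> \<bar>f t \<omega> (qs 0)\<bar> + \<bar>L\<bar> * D"
    have "\<bar>V \<omega>\<bar> * \<bar>f t \<omega> (zn n \<omega>)\<bar> \<le> B * (\<bar>f t \<omega> (qs 0)\<bar> + \<bar>L\<bar> * D)"
      using b znH[OF om] Vb[OF om] by (intro mult_mono) auto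
    then show "norm (V \<omega> * f t \<omega> (zn n \<omega>)) \<le> B * (\<bar>f t \<omega> (qs 0)\<bar> + \<bar>L\<bar> * D)"
      by (simp add: abs_mult)
  qed
qed

lemma lim_N:
  fixes V :: "'a \<Rightarrow> real" and B :: real
  assumes xn: "\<And>n. xn n \<in> borel_measurable M" and yn: "\<And>n. yn n \<in> borel_measurable M"
    and xnH: "\<And>n \<omega>. \<omega> \<in> space M \<Longrightarrow> xn n \<omega> \<in> H" and ynH: "\<And>n \<omega>. \<omega> \<in> space M \<Longrightarrow> yn n \<omega> \<in> H"
    and x: "x \<in> borel_measurable M" and y: "y \<in> borel_measurable M"
    and cx: "\<And>\<omega>. \<omega> \<in> space M \<Longrightarrow> (\<lambda>n. xn n \<omega>) \<longlonglongrightarrow> x \<omega>"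
    and cy: "\<And>\<omega>. \<omega> \<in> space M \<Longrightarrow> (\<lambda>n. yn n \<omega>) \<longlonglongrightarrow> y \<omega>"
    and V: "V \<in> borel_measurable M" and Vb: "\<And>\<omega>. \<omega> \<in> space M \<Longrightarrow> \<bar>V \<omega>\<bar> \<le> B"
  shows "(\<lambda>n. \<integral>\<omega>. V \<omega> * (N (xn n \<omega> - yn n \<omega>))\<^sup>2 \<partial>M) \<longlonglongrightarrow> (\<integral>\<omega>. V \<omega> * (N (x \<omega> - y \<omega>))\<^sup>2 \<partial>M)"
proof (rule integral_dominated_convergence[where w="\<lambda>\<omega>. B * D\<^sup>2"])
  have Nm: "(\<lambda>\<omega>. N (a \<omega> - b \<omega>)) \<in> borel_measurable M" if "a \<in> borel_measurable M" "b \<in> borel_measurable M" for a b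
    using measurable_compose[OF borel_measurable_diff[OF that] N_borel] .
  show "(\<lambda>\<omega>. V \<omega> * (N (x \<omega> - y \<omega>))\<^sup>2) \<in> borel_measurable M"
    using V Nm[OF x y] by simp
  show "(\<lambda>\<omega>. V \<omega> * (N (xn n \<omega> - yn n \<omega>))\<^sup>2) \<in> borel_measurable M" for n
    using V Nm[OF xn yn] by simp
  show "integrable M (\<lambda>\<omega>. B * D\<^sup>2)" by simp
  show "AE \<omega> in M. (\<lambda>n. V \<omega> * (N (xn n \<omega> - yn n \<omega>))\<^sup>2) \<longlonglongrightarrow> V \<omega> * (N (x \<omega> - y \<omega>))\<^sup>2"
  proof (rule AE_I2)
    fix \<omega> assume om: "\<omega> \<in> space M"
    show "(\<lambda>n. V \<omega> * (N (xn n \<omega> - yn n \<omega>))\<^sup>2) \<longlonglongrightarrow> V \<omega> * (N (x \<omega> - y \<omega>))\<^sup>2"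
      by (intro tendsto_mult_left tendsto_power N_tendsto tendsto_diff cx cy om)
  qed
  show "AE \<omega> in M. norm (V \<omega> * (N (xn n \<omega> - yn n \<omega>))\<^sup>2) \<le> B * D\<^sup>2" for n
  proof (rule AE_I2)
    fix \<omega> assume om: "\<omega> \<in> space M"
    have "(N (xn n \<omega> - yn n \<omega>))\<^sup>2 \<le> D\<^sup>2"
      using diam[OF xnH[OF om] ynH[OF om]] N_nonneg by (intro power_mono) auto
    then have "\<bar>V \<omega>\<bar> * (N (xn n \<omega> - yn n \<omega>))\<^sup>2 \<le> B * D\<^sup>2"
      using Vb[OF om] by (intro mult_mono) auto
    then show "norm (V \<omega> * (N (xn n \<omega> - yn n \<omega>))\<^sup>2) \<le> B * D\<^sup>2"
      by (simp add: abs_mult)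
  qed
qed

lemma cond_sc_rand:
  fixes V :: "'a \<Rightarrow> real" and B \<theta> :: real
  assumes t: "t \<ge> 1" and th: "0 \<le> \<theta>" "\<theta> \<le> 1"
    and x: "x \<in> borel_measurable (F (t-1))" and xH: "\<And>\<omega>. \<omega> \<in> space M \<Longrightarrow> x \<omega> \<in> H"
    and y: "y \<in> borel_measurable (F (t-1))" and yH: "\<And>\<omega>. \<omega> \<in> space M \<Longrightarrow> y \<omega> \<in> H"
    and V: "V \<in> borel_measurable (F (t-1))" and Vb: "\<And>\<omega>. \<omega> \<in> space M \<Longrightarrow> 0 \<le> V \<omega> \<and> V \<omega> \<le> B"
  shows "(\<integral>\<omega>. V \<omega> * f t \<omega> (\<theta> *\<^sub>R x \<omega> + (1-\<theta>) *\<^sub>R y \<omega>) \<partial>M)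
     \<le> \<theta> * (\<integral>\<omega>. V \<omega> * f t \<omega> (x \<omega>) \<partial>M) + (1-\<theta>) * (\<integral>\<omega>. V \<omega> * f t \<omega> (y \<omega>) \<partial>M)
        - \<alpha>/2*\<theta>*(1-\<theta>) * (\<integral>\<omega>. V \<omega> * (N (x \<omega> - y \<omega>))\<^sup>2 \<partial>M)"
proof -
  define xn where "xn = (\<lambda>n \<omega>. qs (best qs (x \<omega>) n))"
  define yn where "yn = (\<lambda>n \<omega>. qs (best qs (y \<omega>) n))"
  have xnm: "xn n \<in> borel_measurable (F (t-1))" for n
    unfolding xn_def by (rule measurable_compose_countable[where f="\<lambda>i \<omega>. qs i", OF measurable_const best_meas[OF x]]) simp
  have ynm: "yn n \<in> borel_measurable (F (t-1))" for n
    unfolding yn_def by (rule measurable_compose_countable[where f="\<lambda>i \<omega>. qs i", OF measurable_const best_meas[OF y]]) simp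
  have xnH: "xn n \<omega> \<in> H" "yn n \<omega> \<in> H" for n \<omega> unfolding xn_def yn_def by (rule qs_H)+
  have cx: "\<omega> \<in> space M \<Longrightarrow> (\<lambda>n. xn n \<omega>) \<longlonglongrightarrow> x \<omega>" for \<omega>
    unfolding xn_def using approx_tendsto xH by blast
  have cy: "\<omega> \<in> space M \<Longrightarrow> (\<lambda>n. yn n \<omega>) \<longlonglongrightarrow> y \<omega>" for \<omega>
    unfolding yn_def using approx_tendsto yH by blast
  have cvH: "\<theta> *\<^sub>R a + (1-\<theta>) *\<^sub>R b \<in> H" if "a \<in> H" "b \<in> H" for a b
    using cvx that th by (intro convexD) auto
  have VM: "V \<in> borel_measurable M" using meas_F_M[OF V] .
  have Va: "\<omega> \<in> space M \<Longrightarrow> \<bar>V \<omega>\<bar> \<le> B" for \<omega> using Vb[of \<omega>] by auto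
  have fin: "(\<integral>\<omega>. V \<omega> * f t \<omega> (\<theta> *\<^sub>R xn n \<omega> + (1-\<theta>) *\<^sub>R yn n \<omega>) \<partial>M)
     \<le> \<theta> * (\<integral>\<omega>. V \<omega> * f t \<omega> (xn n \<omega>) \<partial>M) + (1-\<theta>) * (\<integral>\<omega>. V \<omega> * f t \<omega> (yn n \<omega>) \<partial>M)
        - \<alpha>/2*\<theta>*(1-\<theta>) * (\<integral>\<omega>. V \<omega> * (N (xn n \<omega> - yn n \<omega>))\<^sup>2 \<partial>M)" for n
    unfolding xn_def yn_def
    by (rule cond_sc_fin[OF t th best_meas[OF x] best_meas[OF y] _ V Vb]) (auto intro: best_le)
  show ?thesis
  proof (rule LIMSEQ_le[OF _ _ exI[of _ 0], OF _ _ allI[OF impI[OF fin]]])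
    show "(\<lambda>n. \<integral>\<omega>. V \<omega> * f t \<omega> (\<theta> *\<^sub>R xn n \<omega> + (1-\<theta>) *\<^sub>R yn n \<omega>) \<partial>M)
      \<longlonglongrightarrow> (\<integral>\<omega>. V \<omega> * f t \<omega> (\<theta> *\<^sub>R x \<omega> + (1-\<theta>) *\<^sub>R y \<omega>) \<partial>M)"
      by (rule lim_f[OF t _ _ _ _ _ VM Va])
         (use xnm ynm x y xnH xH yH cx cy cvH in \<open>auto intro!: tendsto_intros\<close>)
    show "(\<lambda>n. \<theta> * (\<integral>\<omega>. V \<omega> * f t \<omega> (xn n \<omega>) \<partial>M) + (1-\<theta>) * (\<integral>\<omega>. V \<omega> * f t \<omega> (yn n \<omega>) \<partial>M)
        - \<alpha>/2*\<theta>*(1-\<theta>) * (\<integral>\<omega>. V \<omega> * (N (xn n \<omega> - yn n \<omega>))\<^sup>2 \<partial>M))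
      \<longlonglongrightarrow> \<theta> * (\<integral>\<omega>. V \<omega> * f t \<omega> (x \<omega>) \<partial>M) + (1-\<theta>) * (\<integral>\<omega>. V \<omega> * f t \<omega> (y \<omega>) \<partial>M)
        - \<alpha>/2*\<theta>*(1-\<theta>) * (\<integral>\<omega>. V \<omega> * (N (x \<omega> - y \<omega>))\<^sup>2 \<partial>M)"
      by (intro tendsto_intros lim_f[OF t xnm xnH(1) x xH cx VM Va] lim_f[OF t ynm xnH(2) y yH cy VM Va]
           lim_N[OF meas_F_M[OF xnm] meas_F_M[OF ynm] xnH(1) xnH(2) meas_F_M[OF x] meas_F_M[OF y] cx cy VM Va])
  qed
qed

definition "lipset t \<omega> \<longleftrightarrow> (\<forall>x\<in>H. \<forall>y\<in>H. \<bar>f t \<omega> x - f t \<omega> y\<bar> \<le> L * N (x - y))"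

lemma lipset_AE: "t \<ge> 1 \<Longrightarrow> AE \<omega> in M. lipset t \<omega>"
  unfolding lipset_def by (rule lip)

definition "th n = 1 / (real n + 2)"

lemma th_pos: "0 < th n" and th_le: "th n \<le> 1" and th_lt: "th n < 1"
  unfolding th_def by (auto simp: field_simps)

lemma th_lim: "th \<longlonglongrightarrow> 0"
proof -
  have "(\<lambda>n. inverse (real (Suc (Suc n)))) \<longlonglongrightarrow> 0" by (rule LIMSEQ_Suc[OF LIMSEQ_inverse_real_of_nat])
  moreover have "(\<lambda>n. inverse (real (Suc (Suc n)))) = th" by (auto simp: th_def fun_eq_iff field_simps)
  ultimately show ?thesis by simp
qed

lemma grad_lim:
  assumes t: "t \<ge> 1" and om: "\<omega> \<in> space M"
  shows "(\<lambda>n. (f t \<omega> (th n *\<^sub>R y + (1 - th n) *\<^sub>R x) - f t \<omega> x) / th n) \<longlonglongrightarrow> grad t \<omega> x \<bullet> (y - x)"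
proof -
  define v where "v = y - x"
  have l: "((\<lambda>s::real. x + s *\<^sub>R v) has_derivative (\<lambda>s. s *\<^sub>R v)) (at 0)"
    by (auto intro!: derivative_eq_intros)
  have "((\<lambda>s. f t \<omega> (x + s *\<^sub>R v)) has_derivative (\<lambda>s. grad t \<omega> x \<bullet> (s *\<^sub>R v))) (at 0)"
    using has_derivative_compose[OF l deriv[OF t om]] by simp
  then have "((\<lambda>s. f t \<omega> (x + s *\<^sub>R v)) has_field_derivative (grad t \<omega> x \<bullet> v)) (at 0)"
    unfolding has_field_derivative_def by (simp add: mult.commute[of _ "grad t \<omega> x \<bullet> v"])
  then have d: "((\<lambda>h. (f t \<omega> (x + h *\<^sub>R v) - f t \<omega> x) / h) \<longlongrightarrow> grad t \<omega> x \<bullet> v) (at 0)"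
    unfolding DERIV_def by simp
  have "filterlim th (at 0) sequentially"
    unfolding filterlim_at using th_lim th_pos by (auto intro!: always_eventually simp: less_imp_neq[symmetric])
  from filterlim_compose[OF d this]
  have "(\<lambda>n. (f t \<omega> (x + th n *\<^sub>R v) - f t \<omega> x) / th n) \<longlonglongrightarrow> grad t \<omega> x \<bullet> v" .
  moreover have "x + th n *\<^sub>R v = th n *\<^sub>R y + (1 - th n) *\<^sub>R x" for n
    unfolding v_def by (simp add: algebra_simps)
  ultimately show ?thesis unfolding v_def by simp
qed

lemma quot_bound:
  assumes ls: "lipset t \<omega>" and x: "x \<in> H" and y: "y \<in> H" and s: "0 < s" "s \<le> 1"
  shows "\<bar>(f t \<omega> (s *\<^sub>R y + (1 - s) *\<^sub>R x) - f t \<omega> x) / s\<bar> \<le> L * N (y - x)"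
proof -
  have pH: "s *\<^sub>R y + (1 - s) *\<^sub>R x \<in> H" using cvx x y s by (intro convexD) auto
  have e: "s *\<^sub>R y + (1 - s) *\<^sub>R x - x = s *\<^sub>R (y - x)" by (simp add: algebra_simps)
  have "\<bar>f t \<omega> (s *\<^sub>R y + (1 - s) *\<^sub>R x) - f t \<omega> x\<bar> \<le> L * N (s *\<^sub>R (y - x))"
    using ls pH x unfolding lipset_def e[symmetric] by blast
  also have "\<dots> = s * (L * N (y - x))" using s by (simp add: N_scale)
  finally show ?thesis using s by (simp add: abs_div pos_divide_le_eq mult.commute)
qed

lemma grad_bound:
  assumes t: "t \<ge> 1" and om: "\<omega> \<in> space M" and ls: "lipset t \<omega>" and x: "x \<in> H" and y: "y \<in> H"
  shows "\<bar>grad t \<omega> x \<bullet> (y - x)\<bar> \<le> L * N (y - x)"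
proof (rule tendsto_le[OF sequentially_bot])
  show "(\<lambda>n. \<bar>(f t \<omega> (th n *\<^sub>R y + (1 - th n) *\<^sub>R x) - f t \<omega> x) / th n\<bar>) \<longlonglongrightarrow> \<bar>grad t \<omega> x \<bullet> (y - x)\<bar>"
    by (intro tendsto_rabs grad_lim[OF t om])
  show "eventually (\<lambda>n. \<bar>(f t \<omega> (th n *\<^sub>R y + (1 - th n) *\<^sub>R x) - f t \<omega> x) / th n\<bar> \<le> L * N (y - x)) sequentially"
    using quot_bound[OF ls x y th_pos th_le] by (intro always_eventually) auto
qed simp

lemma u_meas': "u \<in> borel_measurable (F s)" using meas_F_mono[OF _ u_meas] by simp

lemma dq_meas:
  assumes t: "t \<ge> 1"
  shows "(\<lambda>\<omega>. grad t \<omega> (w t \<omega>) \<bullet> (u \<omega> - w t \<omega>)) \<in> borel_measurable (F t)"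
proof (rule borel_measurable_LIMSEQ_real)
  have st: "t - 1 \<le> t" by simp
  have pm: "(\<lambda>\<omega>. th n *\<^sub>R u \<omega> + (1 - th n) *\<^sub>R w t \<omega>) \<in> borel_measurable (F (t-1))" for n
    using u_meas'[of "t-1"] w_meas[OF t] by measurable
  have pH: "\<omega> \<in> space M \<Longrightarrow> th n *\<^sub>R u \<omega> + (1 - th n) *\<^sub>R w t \<omega> \<in> H" for n \<omega>
    using cvx uH wH[OF t] th_pos[of n] th_le[of n] by (intro convexD) auto
  show "(\<lambda>\<omega>. (f t \<omega> (th n *\<^sub>R u \<omega> + (1 - th n) *\<^sub>R w t \<omega>) - f t \<omega> (w t \<omega>)) / th n) \<in> borel_measurable (F t)" for n
    using rand_meas[OF t pm pH st] rand_meas[OF t w_meas[OF t] wH[OF t] st] by measurable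
  show "(\<lambda>n. (f t \<omega> (th n *\<^sub>R u \<omega> + (1 - th n) *\<^sub>R w t \<omega>) - f t \<omega> (w t \<omega>)) / th n) \<longlonglongrightarrow> grad t \<omega> (w t \<omega>) \<bullet> (u \<omega> - w t \<omega>)"
    if "\<omega> \<in> space (F t)" for \<omega>
    using grad_lim[OF t] that space_F by simp
qed

lemma int_rand:
  fixes V :: "'a \<Rightarrow> real" and B :: real
  assumes t: "t \<ge> 1" and z: "z \<in> borel_measurable (F s)" and zH: "\<And>\<omega>. \<omega> \<in> space M \<Longrightarrow> z \<omega> \<in> H"
    and st: "s \<le> t"
    and V: "V \<in> borel_measurable M" and Vb: "\<And>\<omega>. \<omega> \<in> space M \<Longrightarrow> \<bar>V \<omega>\<bar> \<le> B"
  shows "integrable M (\<lambda>\<omega>. V \<omega> * f t \<omega> (z \<omega>))"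
proof (rule Bochner_Integration.integrable_bound[where f="\<lambda>\<omega>. B * (\<bar>f t \<omega> (qs 0)\<bar> + \<bar>L\<bar> * D)"])
  show "integrable M (\<lambda>\<omega>. B * (\<bar>f t \<omega> (qs 0)\<bar> + \<bar>L\<bar> * D))"
    using f_int[OF t qs_H] by auto
  show "(\<lambda>\<omega>. V \<omega> * f t \<omega> (z \<omega>)) \<in> borel_measurable M"
    using V meas_F_M[OF rand_meas[OF t z zH st]] by simp
  show "AE \<omega> in M. norm (V \<omega> * f t \<omega> (z \<omega>)) \<le> norm (B * (\<bar>f t \<omega> (qs 0)\<bar> + \<bar>L\<bar> * D))"
    using f_bound[OF t]
  proof (rule AE_mp, intro AE_I2 impI)
    fix \<omega> assume om: "\<omega> \<in> space M" and b: "\<forall>z\<in>H. \<bar>f t \<omega> z\<bar> \<le> \<bar>f t \<omega> (qs 0)\<bar> + \<bar>L\<bar> * D"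
    have "\<bar>V \<omega>\<bar> * \<bar>f t \<omega> (z \<omega>)\<bar> \<le> B * (\<bar>f t \<omega> (qs 0)\<bar> + \<bar>L\<bar> * D)"
      using b zH[OF om] Vb[OF om] by (intro mult_mono) auto
    moreover have "B \<ge> 0" using Vb[OF om] by linarith
    ultimately show "norm (V \<omega> * f t \<omega> (z \<omega>)) \<le> norm (B * (\<bar>f t \<omega> (qs 0)\<bar> + \<bar>L\<bar> * D))"
      using D_nonneg by (simp add: abs_mult)
  qed
qed

lemma cond_X:
  fixes W :: "'a \<Rightarrow> real" and B :: real
  assumes t: "t \<ge> 1" and W: "W \<in> borel_measurable (F (t-1))"
    and Wb: "\<And>\<omega>. \<omega> \<in> space M \<Longrightarrow> 0 \<le> W \<omega> \<and> W \<omega> \<le> B"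
  shows "(\<integral>\<omega>. W \<omega> * (f t \<omega> (w t \<omega>) - f t \<omega> (u \<omega>) - (w t \<omega> - u \<omega>) \<bullet> grad t \<omega> (w t \<omega>)) \<partial>M)
      \<le> - (\<alpha>/2) * (\<integral>\<omega>. W \<omega> * (N (w t \<omega> - u \<omega>))\<^sup>2 \<partial>M)"
proof -
  have st: "t - 1 \<le> t" by simp
  have um: "u \<in> borel_measurable (F (t-1))" by (rule u_meas')
  have wm: "w t \<in> borel_measurable (F (t-1))" by (rule w_meas[OF t])
  have WM: "W \<in> borel_measurable M" using meas_F_M[OF W] .
  have Wa: "\<omega> \<in> space M \<Longrightarrow> \<bar>W \<omega>\<bar> \<le> B" for \<omega> using Wb[of \<omega>] by auto
  have B0: "B \<ge> 0" using Wb space_ne by fastforce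
  define pn where "pn = (\<lambda>n \<omega>. th n *\<^sub>R u \<omega> + (1 - th n) *\<^sub>R w t \<omega>)"
  have pnm: "pn n \<in> borel_measurable (F (t-1))" for n
    unfolding pn_def using um wm by measurable
  have pnH: "\<omega> \<in> space M \<Longrightarrow> pn n \<omega> \<in> H" for n \<omega>
    unfolding pn_def using cvx uH wH[OF t] th_pos[of n] th_le[of n] by (intro convexD) auto
  define G where "G = (\<lambda>\<omega>. grad t \<omega> (w t \<omega>) \<bullet> (u \<omega> - w t \<omega>))"
  define Fu where "Fu = (\<integral>\<omega>. W \<omega> * f t \<omega> (u \<omega>) \<partial>M)"
  define Fw where "Fw = (\<integral>\<omega>. W \<omega> * f t \<omega> (w t \<omega>) \<partial>M)"
  define Q where "Q = (\<integral>\<omega>. W \<omega> * (N (u \<omega> - w t \<omega>))\<^sup>2 \<partial>M)"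
  have iu: "integrable M (\<lambda>\<omega>. W \<omega> * f t \<omega> (u \<omega>))" by (rule int_rand[OF t um uH st WM Wa])
  have iw: "integrable M (\<lambda>\<omega>. W \<omega> * f t \<omega> (w t \<omega>))" by (rule int_rand[OF t wm wH[OF t] st WM Wa])
  have ip: "integrable M (\<lambda>\<omega>. W \<omega> * f t \<omega> (pn n \<omega>))" for n by (rule int_rand[OF t pnm pnH st WM Wa])
  define qn where "qn = (\<lambda>n \<omega>. W \<omega> * ((f t \<omega> (pn n \<omega>) - f t \<omega> (w t \<omega>)) / th n))"
  have qn_eq: "(\<integral>\<omega>. qn n \<omega> \<partial>M) = ((\<integral>\<omega>. W \<omega> * f t \<omega> (pn n \<omega>) \<partial>M) - Fw) / th n" for n
  proof -
    have "(\<integral>\<omega>. qn n \<omega> \<partial>M) = (\<integral>\<omega>. (W \<omega> * f t \<omega> (pn n \<omega>) - W \<omega> * f t \<omega> (w t \<omega>)) / th n \<partial>M)"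
      unfolding qn_def by (simp add: algebra_simps diff_divide_distrib)
    also have "\<dots> = ((\<integral>\<omega>. W \<omega> * f t \<omega> (pn n \<omega>) \<partial>M) - Fw) / th n"
      unfolding Fw_def using ip[of n] iw by simp
    finally show ?thesis .
  qed
  have sc_n: "(\<integral>\<omega>. W \<omega> * f t \<omega> (pn n \<omega>) \<partial>M) \<le> th n * Fu + (1 - th n) * Fw - \<alpha>/2*th n*(1-th n) * Q" for n
    unfolding pn_def Fu_def Fw_def Q_def
    by (rule cond_sc_rand[OF t less_imp_le[OF th_pos] th_le um uH wm wH[OF t] W Wb])
  have ineq_n: "(\<integral>\<omega>. qn n \<omega> \<partial>M) \<le> Fu - Fw - \<alpha>/2*(1-th n) * Q" for n
  proof -
    have "(\<integral>\<omega>. W \<omega> * f t \<omega> (pn n \<omega>) \<partial>M) - Fw \<le> th n * (Fu - Fw - \<alpha>/2*(1-th n) * Q)"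
      using sc_n[of n] by (simp add: algebra_simps)
    then show ?thesis unfolding qn_eq using th_pos[of n] by (simp add: pos_divide_le_eq mult.commute)
  qed
  have lim_q: "(\<lambda>n. \<integral>\<omega>. qn n \<omega> \<partial>M) \<longlonglongrightarrow> (\<integral>\<omega>. W \<omega> * G \<omega> \<partial>M)"
    and intG: "integrable M (\<lambda>\<omega>. W \<omega> * G \<omega>)"
  proof -
    have Gm: "G \<in> borel_measurable M" unfolding G_def using meas_F_M[OF dq_meas[OF t]] .
    have qm: "qn n \<in> borel_measurable M" for n
      unfolding qn_def using WM meas_F_M[OF rand_meas[OF t pnm pnH st]] meas_F_M[OF rand_meas[OF t wm wH[OF t] st]]
      by measurable
    have conv: "AE \<omega> in M. (\<lambda>n. qn n \<omega>) \<longlonglongrightarrow> W \<omega> * G \<omega>"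
    proof (rule AE_I2)
      fix \<omega> assume om: "\<omega> \<in> space M"
      show "(\<lambda>n. qn n \<omega>) \<longlonglongrightarrow> W \<omega> * G \<omega>"
        unfolding qn_def pn_def G_def by (intro tendsto_mult_left grad_lim[OF t om])
    qed
    have bd: "AE \<omega> in M. norm (qn n \<omega>) \<le> B * (\<bar>L\<bar> * D)" for n
      using lipset_AE[OF t]
    proof (rule AE_mp, intro AE_I2 impI)
      fix \<omega> assume om: "\<omega> \<in> space M" and ls: "lipset t \<omega>"
      have "\<bar>(f t \<omega> (pn n \<omega>) - f t \<omega> (w t \<omega>)) / th n\<bar> \<le> L * N (u \<omega> - w t \<omega>)"
        unfolding pn_def by (rule quot_bound[OF ls wH[OF t om] uH[OF om] th_pos th_le])
      also have "\<dots> \<le> \<bar>L\<bar> * D"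
        using diam[OF uH[OF om] wH[OF t om]] N_nonneg[of "u \<omega> - w t \<omega>"]
        by (metis abs_ge_self abs_mult abs_of_nonneg mult_mono' order_trans abs_ge_zero D_nonneg)
      finally have "\<bar>W \<omega>\<bar> * \<bar>(f t \<omega> (pn n \<omega>) - f t \<omega> (w t \<omega>)) / th n\<bar> \<le> B * (\<bar>L\<bar> * D)"
        using Wa[OF om] by (intro mult_mono) auto
      then show "norm (qn n \<omega>) \<le> B * (\<bar>L\<bar> * D)" unfolding qn_def by (simp add: abs_mult)
    qed
    have "integrable M (\<lambda>\<omega>. B * (\<bar>L\<bar> * D))" by simp
    note dc = integral_dominated_convergence[OF _ qm this conv bd] integrable_dominated_convergence[OF _ qm this conv bd]
    show "(\<lambda>n. \<integral>\<omega>. qn n \<omega> \<partial>M) \<longlonglongrightarrow> (\<integral>\<omega>. W \<omega> * G \<omega> \<partial>M)" using dc(1) WM Gm by simp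
    show "integrable M (\<lambda>\<omega>. W \<omega> * G \<omega>)" using dc(2) WM Gm by simp
  qed
  have lim_r: "(\<lambda>n. Fu - Fw - \<alpha>/2*(1-th n) * Q) \<longlonglongrightarrow> Fu - Fw - \<alpha>/2*(1-0) * Q"
    by (intro tendsto_intros th_lim)
  have main: "(\<integral>\<omega>. W \<omega> * G \<omega> \<partial>M) \<le> Fu - Fw - \<alpha>/2 * Q"
    using LIMSEQ_le[OF lim_q lim_r] ineq_n by auto
  have "(\<integral>\<omega>. W \<omega> * (f t \<omega> (w t \<omega>) - f t \<omega> (u \<omega>) - (w t \<omega> - u \<omega>) \<bullet> grad t \<omega> (w t \<omega>)) \<partial>M)
      = (\<integral>\<omega>. W \<omega> * f t \<omega> (w t \<omega>) - W \<omega> * f t \<omega> (u \<omega>) + W \<omega> * G \<omega> \<partial>M)"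
  proof (rule Bochner_Integration.integral_cong[OF refl])
    fix \<omega>
    have eqG: "(w t \<omega> - u \<omega>) \<bullet> grad t \<omega> (w t \<omega>) = - G \<omega>"
      unfolding G_def by (simp add: inner_commute inner_diff_left)
    show "W \<omega> * (f t \<omega> (w t \<omega>) - f t \<omega> (u \<omega>) - (w t \<omega> - u \<omega>) \<bullet> grad t \<omega> (w t \<omega>))
        = W \<omega> * f t \<omega> (w t \<omega>) - W \<omega> * f t \<omega> (u \<omega>) + W \<omega> * G \<omega>"
      unfolding eqG by (simp add: algebra_simps)
  qed
  also have "\<dots> = Fw - Fu + (\<integral>\<omega>. W \<omega> * G \<omega> \<partial>M)"
    unfolding Fw_def Fu_def using iu iw intG by simp
  also have "\<dots> \<le> - (\<alpha>/2) * Q" using main by simp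
  also have "Q = (\<integral>\<omega>. W \<omega> * (N (w t \<omega> - u \<omega>))\<^sup>2 \<partial>M)"
    unfolding Q_def using N_commute by simp
  finally show ?thesis .
qed

definition "X t \<omega> = f t \<omega> (w t \<omega>) - f t \<omega> (u \<omega>) - (w t \<omega> - u \<omega>) \<bullet> grad t \<omega> (w t \<omega>)"
definition "r t \<omega> = N (w t \<omega> - u \<omega>)"

lemma X_meas: assumes t: "t \<ge> 1" shows "X t \<in> borel_measurable (F t)"
proof -
  have st: "t - 1 \<le> t" "0 \<le> t" by auto
  have e: "X t = (\<lambda>\<omega>. f t \<omega> (w t \<omega>) - f t \<omega> (u \<omega>) + grad t \<omega> (w t \<omega>) \<bullet> (u \<omega> - w t \<omega>))"
    unfolding X_def by (auto simp: fun_eq_iff inner_commute inner_diff_left inner_diff_right)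
  show ?thesis unfolding e
    using rand_meas[OF t w_meas[OF t] wH[OF t] st(1)] rand_meas[OF t u_meas uH st(2)] dq_meas[OF t]
    by measurable
qed

lemma r_meas: assumes t: "t \<ge> 1" shows "r t \<in> borel_measurable (F (t-1))"
  unfolding r_def using measurable_compose[OF borel_measurable_diff[OF w_meas[OF t] u_meas'] N_borel] .

lemma r_bound: "t \<ge> 1 \<Longrightarrow> \<omega> \<in> space M \<Longrightarrow> 0 \<le> r t \<omega> \<and> r t \<omega> \<le> D"
  unfolding r_def using N_nonneg diam wH uH by auto

lemma X_bound:
  assumes t: "t \<ge> 1" and om: "\<omega> \<in> space M" and ls: "lipset t \<omega>"
  shows "\<bar>X t \<omega>\<bar> \<le> 2 * L * r t \<omega>"
proof -
  have "\<bar>f t \<omega> (w t \<omega>) - f t \<omega> (u \<omega>)\<bar> \<le> L * N (w t \<omega> - u \<omega>)"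
    using ls wH[OF t om] uH[OF om] unfolding lipset_def by blast
  moreover have "\<bar>grad t \<omega> (w t \<omega>) \<bullet> (u \<omega> - w t \<omega>)\<bar> \<le> L * N (u \<omega> - w t \<omega>)"
    by (rule grad_bound[OF t om ls wH[OF t om] uH[OF om]])
  moreover have "(w t \<omega> - u \<omega>) \<bullet> grad t \<omega> (w t \<omega>) = - (grad t \<omega> (w t \<omega>) \<bullet> (u \<omega> - w t \<omega>))"
    by (simp add: inner_commute inner_diff_left inner_diff_right)
  ultimately show ?thesis unfolding X_def r_def using N_commute[of "w t \<omega>" "u \<omega>"] by auto
qed

lemma D_eq: "L > 0 \<Longrightarrow> D = 4 * L / \<alpha>" unfolding D_def by simp

definition "lam = \<alpha> / (8 * L\<^sup>2)"

lemma step: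
  fixes W :: "'a \<Rightarrow> real" and B :: real
  assumes t: "t \<ge> 1" and Lp: "L > 0" and W: "W \<in> borel_measurable (F (t-1))"
    and Wb: "\<And>\<omega>. \<omega> \<in> space M \<Longrightarrow> 0 \<le> W \<omega> \<and> W \<omega> \<le> B"
  shows "(\<integral>\<omega>. W \<omega> * exp (lam * (X t \<omega> + \<alpha>/4 * (r t \<omega>)\<^sup>2)) \<partial>M) \<le> (\<integral>\<omega>. W \<omega> \<partial>M)"
proof -
  have lam0: "lam > 0" unfolding lam_def using apos Lp by simp
  have lamL: "2 * lam * L\<^sup>2 = \<alpha> / 4" unfolding lam_def using Lp by (simp add: field_simps)
  have B0: "B \<ge> 0" using Wb space_ne by fastforce
  have DL: "D = 4 * L / \<alpha>" using D_eq[OF Lp] .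
  define e where "e = (\<lambda>\<omega>. exp (lam * (\<alpha>/4 * (r t \<omega>)\<^sup>2)))"
  define a where "a = (\<lambda>\<omega>. - 2 * L * r t \<omega>)"
  define b where "b = (\<lambda>\<omega>. 2 * L * r t \<omega>)"
  define c0 where "c0 = (\<lambda>\<omega>. (exp (lam * a \<omega>) + exp (lam * b \<omega>)) / 2)"
  define c1 where "c1 = (\<lambda>\<omega>. if r t \<omega> = 0 then 0 else (exp (lam * b \<omega>) - exp (lam * a \<omega>)) / (b \<omega> - a \<omega>))"
  define K where "K = exp (lam * (2 * L * D))"
  have rb: "\<omega> \<in> space M \<Longrightarrow> 0 \<le> r t \<omega> \<and> r t \<omega> \<le> D" for \<omega> using r_bound[OF t] .
  have ab: "\<omega> \<in> space M \<Longrightarrow> r t \<omega> \<noteq> 0 \<Longrightarrow> a \<omega> < b \<omega>" for \<omega>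
    using rb[of \<omega>] Lp unfolding a_def b_def by (simp add: less_le)
  have expb: "\<omega> \<in> space M \<Longrightarrow> exp (lam * b \<omega>) \<le> K" for \<omega>
    unfolding K_def b_def using rb[of \<omega>] lam0 Lp by (simp add: mult_left_mono)
  have expa: "\<omega> \<in> space M \<Longrightarrow> exp (lam * a \<omega>) \<le> K" for \<omega>
  proof -
    assume om: "\<omega> \<in> space M"
    have "lam * a \<omega> \<le> lam * b \<omega>" unfolding a_def b_def using rb[OF om] lam0 Lp by (simp add: mult_left_mono)
    then show ?thesis using expb[OF om] by (meson exp_le_cancel_iff order_trans)
  qed
  have c1b: "\<omega> \<in> space M \<Longrightarrow> 0 \<le> c1 \<omega> \<and> c1 \<omega> \<le> lam * K" for \<omega>
  proof -
    assume om: "\<omega> \<in> space M"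
    show ?thesis
    proof (cases "r t \<omega> = 0")
      case True then show ?thesis unfolding c1_def K_def using lam0 by simp
    next
      case False
      note cs = chord_slope[OF ab[OF om False] less_imp_le[OF lam0]]
      have "lam * exp (lam * b \<omega>) \<le> lam * K" using expb[OF om] lam0 by simp
      then show ?thesis unfolding c1_def using False cs by simp
    qed
  qed
  have c0b: "0 \<le> c0 \<omega> \<and> c0 \<omega> \<le> K" if om: "\<omega> \<in> space M" for \<omega>
  proof -
    have h1: "exp (lam * a \<omega>) \<le> K" "exp (lam * b \<omega>) \<le> K" using expa[OF om] expb[OF om] by auto
    have h2: "0 < exp (lam * a \<omega>)" "0 < exp (lam * b \<omega>)" by auto
    have e: "c0 \<omega> = (exp (lam * a \<omega>) + exp (lam * b \<omega>)) / 2" unfolding c0_def by simp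
    have "exp (lam * a \<omega>) + exp (lam * b \<omega>) \<le> K + K" using add_mono[OF h1] .
    then show ?thesis unfolding e by (simp add: add_nonneg_nonneg)
  qed
  have eb: "\<omega> \<in> space M \<Longrightarrow> 0 \<le> e \<omega> \<and> e \<omega> \<le> exp (lam * (\<alpha>/4 * D\<^sup>2))" for \<omega>
    unfolding e_def using rb[of \<omega>] lam0 apos by (auto intro!: mult_left_mono power_mono)
  have key_id: "c0 \<omega> + c1 \<omega> * x = ((b \<omega> - x) * exp (lam * a \<omega>) + (x - a \<omega>) * exp (lam * b \<omega>)) / (b \<omega> - a \<omega>)"
    if "\<omega> \<in> space M" "r t \<omega> \<noteq> 0" for \<omega> x
  proof -
    have bpos: "b \<omega> > 0" using ab[OF that] unfolding a_def b_def by simp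
    have "a \<omega> = - b \<omega>" unfolding a_def b_def by simp
    then show ?thesis unfolding c0_def c1_def using that bpos by (simp add: field_simps)
  qed
  have F5: "exp (lam * X t \<omega>) \<le> c0 \<omega> + c1 \<omega> * X t \<omega>" if om: "\<omega> \<in> space M" and ls: "lipset t \<omega>" for \<omega>
  proof (cases "r t \<omega> = 0")
    case True
    then have "X t \<omega> = 0" using X_bound[OF t om ls] by simp
    then show ?thesis unfolding c0_def c1_def a_def b_def using True by simp
  next
    case False
    have "\<bar>X t \<omega>\<bar> \<le> 2 * L * r t \<omega>" by (rule X_bound[OF t om ls])
    then have "a \<omega> \<le> X t \<omega>" "X t \<omega> \<le> b \<omega>" unfolding a_def b_def by auto
    from exp_chord[OF ab[OF om False] this less_imp_le[OF lam0]]
    show ?thesis unfolding key_id[OF om False] .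
  qed
  have F6: "e \<omega> * (c0 \<omega> + c1 \<omega> * (- (\<alpha>/2) * (r t \<omega>)\<^sup>2)) \<le> 1" if om: "\<omega> \<in> space M" for \<omega>
  proof (cases "r t \<omega> = 0")
    case True
    then show ?thesis unfolding e_def c0_def c1_def a_def b_def by simp
  next
    case False
    define m where "m = - (\<alpha>/2) * (r t \<omega>)\<^sup>2"
    have rpos: "r t \<omega> > 0" using rb[OF om] False by simp
    have "\<alpha> * r t \<omega> \<le> 4 * L" using rb[OF om] apos unfolding DL by (simp add: field_simps)
    then have "\<alpha> / 2 * (r t \<omega>)\<^sup>2 \<le> 2 * L * r t \<omega>"
      using rpos by (simp add: power2_eq_square)
    then have am: "a \<omega> \<le> m" unfolding a_def m_def by simp
    have mb: "m \<le> b \<omega>"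
    proof -
      have "0 \<le> \<alpha>/2 * (r t \<omega>)\<^sup>2" using apos by simp
      moreover have "0 \<le> 2 * L * r t \<omega>" using Lp rpos by simp
      ultimately show ?thesis unfolding m_def b_def by linarith
    qed
    have "c0 \<omega> + c1 \<omega> * m \<le> exp (lam * m + lam\<^sup>2 * (b \<omega> - a \<omega>)\<^sup>2 / 8)"
      unfolding key_id[OF om False] by (rule hoeff_det[OF ab[OF om False] am mb less_imp_le[OF lam0]])
    then have "e \<omega> * (c0 \<omega> + c1 \<omega> * m) \<le> e \<omega> * exp (lam * m + lam\<^sup>2 * (b \<omega> - a \<omega>)\<^sup>2 / 8)"
      using eb[OF om] by (simp add: mult_left_mono)
    also have "\<dots> = exp (lam * (\<alpha>/4 * (r t \<omega>)\<^sup>2) + (lam * m + lam\<^sup>2 * (b \<omega> - a \<omega>)\<^sup>2 / 8))"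
      unfolding e_def by (simp add: exp_add)
    also have "lam * (\<alpha>/4 * (r t \<omega>)\<^sup>2) + (lam * m + lam\<^sup>2 * (b \<omega> - a \<omega>)\<^sup>2 / 8)
        = lam * (r t \<omega>)\<^sup>2 * (2 * lam * L\<^sup>2 - \<alpha>/4)"
      unfolding m_def a_def b_def by (simp add: power2_eq_square algebra_simps)
    also have "\<dots> = 0" using lamL by simp
    finally show ?thesis unfolding m_def by simp
  qed
  have WM: "W \<in> borel_measurable M" using meas_F_M[OF W] .
  have rm: "r t \<in> borel_measurable (F (t-1))" by (rule r_meas[OF t])
  have XM: "X t \<in> borel_measurable M" using meas_F_M[OF X_meas[OF t]] .
  have em: "e \<in> borel_measurable (F (t-1))" unfolding e_def using rm by measurable
  have c0m: "c0 \<in> borel_measurable (F (t-1))" unfolding c0_def a_def b_def using rm by measurable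
  have c1m: "c1 \<in> borel_measurable (F (t-1))" unfolding c1_def a_def b_def using rm by measurable
  define E where "E = exp (lam * (\<alpha>/4 * D\<^sup>2))"
  have E0: "E \<ge> 0" unfolding E_def by simp
  define W1 where "W1 = (\<lambda>\<omega>. W \<omega> * e \<omega> * c1 \<omega>)"
  have W1m: "W1 \<in> borel_measurable (F (t-1))" unfolding W1_def using W em c1m by measurable
  have W1b: "\<omega> \<in> space M \<Longrightarrow> 0 \<le> W1 \<omega> \<and> W1 \<omega> \<le> B * E * (lam * K)" for \<omega>
    unfolding W1_def E_def using Wb[of \<omega>] eb[of \<omega>] c1b[of \<omega>] by (auto intro!: mult_mono mult_nonneg_nonneg)
  have condX: "(\<integral>\<omega>. W1 \<omega> * X t \<omega> \<partial>M) \<le> - (\<alpha>/2) * (\<integral>\<omega>. W1 \<omega> * (r t \<omega>)\<^sup>2 \<partial>M)"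
    unfolding X_def r_def by (rule cond_X[OF t W1m W1b])
  have bnd: "integrable M h" if "h \<in> borel_measurable M" "AE \<omega> in M. \<bar>h \<omega>\<bar> \<le> C" for h :: "'a \<Rightarrow> real" and C
    by (rule integrable_const_bound[where B=C]) (use that in auto)
  have lsAE: "AE \<omega> in M. lipset t \<omega>" by (rule lipset_AE[OF t])
  have XAE: "AE \<omega> in M. \<bar>X t \<omega>\<bar> \<le> 2 * L * D"
    using lsAE
  proof (rule AE_mp, intro AE_I2 impI)
    fix \<omega> assume om: "\<omega> \<in> space M" and "lipset t \<omega>"
    then have "\<bar>X t \<omega>\<bar> \<le> 2 * L * r t \<omega>" by (rule X_bound[OF t])
    also have "\<dots> \<le> 2 * L * D" using rb[OF om] Lp by simp
    finally show "\<bar>X t \<omega>\<bar> \<le> 2 * L * D" .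
  qed
  have i1: "integrable M (\<lambda>\<omega>. W \<omega> * e \<omega> * exp (lam * X t \<omega>))"
  proof (rule bnd)
    show "(\<lambda>\<omega>. W \<omega> * e \<omega> * exp (lam * X t \<omega>)) \<in> borel_measurable M"
      using WM meas_F_M[OF em] XM by measurable
    show "AE \<omega> in M. \<bar>W \<omega> * e \<omega> * exp (lam * X t \<omega>)\<bar> \<le> B * E * exp (lam * (2 * L * D))"
      using XAE
    proof (rule AE_mp, intro AE_I2 impI)
      fix \<omega> assume om: "\<omega> \<in> space M" and xb: "\<bar>X t \<omega>\<bar> \<le> 2 * L * D"
      have "exp (lam * X t \<omega>) \<le> exp (lam * (2 * L * D))" using xb lam0 by (simp add: mult_left_mono)
      then show "\<bar>W \<omega> * e \<omega> * exp (lam * X t \<omega>)\<bar> \<le> B * E * exp (lam * (2 * L * D))"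
        unfolding E_def using Wb[OF om] eb[OF om] by (simp add: abs_mult mult_mono mult_nonneg_nonneg)
    qed
  qed
  have i2: "integrable M (\<lambda>\<omega>. W \<omega> * e \<omega> * c0 \<omega>)"
  proof (rule bnd)
    show "(\<lambda>\<omega>. W \<omega> * e \<omega> * c0 \<omega>) \<in> borel_measurable M"
      using WM meas_F_M[OF em] meas_F_M[OF c0m] by measurable
    show "AE \<omega> in M. \<bar>W \<omega> * e \<omega> * c0 \<omega>\<bar> \<le> B * E * K"
    proof (rule AE_I2)
      fix \<omega> assume om: "\<omega> \<in> space M"
      have we: "W \<omega> * e \<omega> \<le> B * E" "0 \<le> W \<omega> * e \<omega>"
        using Wb[OF om] eb[OF om] unfolding E_def by (auto intro!: mult_mono)
      then have "W \<omega> * e \<omega> * c0 \<omega> \<le> B * E * K" using c0b[OF om] mult_mono[of "W \<omega> * e \<omega>" "B * E" "c0 \<omega>" K] by auto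
      moreover have "0 \<le> W \<omega> * e \<omega> * c0 \<omega>" using we c0b[OF om] by simp
      ultimately show "\<bar>W \<omega> * e \<omega> * c0 \<omega>\<bar> \<le> B * E * K" by simp
    qed
  qed
  have i3: "integrable M (\<lambda>\<omega>. W1 \<omega> * X t \<omega>)"
  proof (rule bnd)
    show "(\<lambda>\<omega>. W1 \<omega> * X t \<omega>) \<in> borel_measurable M"
      using meas_F_M[OF W1m] XM by measurable
    show "AE \<omega> in M. \<bar>W1 \<omega> * X t \<omega>\<bar> \<le> (B * E * (lam * K)) * (2 * L * D)"
      using XAE
    proof (rule AE_mp, intro AE_I2 impI)
      fix \<omega> assume om: "\<omega> \<in> space M" and xb: "\<bar>X t \<omega>\<bar> \<le> 2 * L * D"
      show "\<bar>W1 \<omega> * X t \<omega>\<bar> \<le> (B * E * (lam * K)) * (2 * L * D)"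
        using W1b[OF om] xb by (simp add: abs_mult mult_mono)
    qed
  qed
  have i4: "integrable M (\<lambda>\<omega>. W1 \<omega> * (r t \<omega>)\<^sup>2)"
  proof (rule bnd)
    show "(\<lambda>\<omega>. W1 \<omega> * (r t \<omega>)\<^sup>2) \<in> borel_measurable M"
      using meas_F_M[OF W1m] meas_F_M[OF rm] by measurable
    show "AE \<omega> in M. \<bar>W1 \<omega> * (r t \<omega>)\<^sup>2\<bar> \<le> (B * E * (lam * K)) * D\<^sup>2"
    proof (rule AE_I2)
      fix \<omega> assume om: "\<omega> \<in> space M"
      have "(r t \<omega>)\<^sup>2 \<le> D\<^sup>2" using rb[OF om] by (intro power_mono) auto
      then have "W1 \<omega> * (r t \<omega>)\<^sup>2 \<le> (B * E * (lam * K)) * D\<^sup>2"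
        using W1b[OF om] mult_mono[of "W1 \<omega>" "B * E * (lam * K)" "(r t \<omega>)\<^sup>2" "D\<^sup>2"] by auto
      then show "\<bar>W1 \<omega> * (r t \<omega>)\<^sup>2\<bar> \<le> (B * E * (lam * K)) * D\<^sup>2" using W1b[OF om] by simp
    qed
  qed
  have "(\<integral>\<omega>. W \<omega> * exp (lam * (X t \<omega> + \<alpha>/4 * (r t \<omega>)\<^sup>2)) \<partial>M) = (\<integral>\<omega>. W \<omega> * e \<omega> * exp (lam * X t \<omega>) \<partial>M)"
    unfolding e_def by (intro Bochner_Integration.integral_cong refl) (simp add: distrib_left exp_add)
  also have "\<dots> \<le> (\<integral>\<omega>. W \<omega> * e \<omega> * c0 \<omega> + W1 \<omega> * X t \<omega> \<partial>M)"
  proof (rule integral_mono_AE[OF i1 Bochner_Integration.integrable_add[OF i2 i3]])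
    show "AE \<omega> in M. W \<omega> * e \<omega> * exp (lam * X t \<omega>) \<le> W \<omega> * e \<omega> * c0 \<omega> + W1 \<omega> * X t \<omega>"
      using lsAE
    proof (rule AE_mp, intro AE_I2 impI)
      fix \<omega> assume om: "\<omega> \<in> space M" and ls: "lipset t \<omega>"
      have "W \<omega> * e \<omega> * exp (lam * X t \<omega>) \<le> W \<omega> * e \<omega> * (c0 \<omega> + c1 \<omega> * X t \<omega>)"
        using F5[OF om ls] Wb[OF om] eb[OF om] by (intro mult_left_mono) auto
      then show "W \<omega> * e \<omega> * exp (lam * X t \<omega>) \<le> W \<omega> * e \<omega> * c0 \<omega> + W1 \<omega> * X t \<omega>"
        unfolding W1_def by (simp add: algebra_simps)
    qed
  qed
  also have "\<dots> = (\<integral>\<omega>. W \<omega> * e \<omega> * c0 \<omega> \<partial>M) + (\<integral>\<omega>. W1 \<omega> * X t \<omega> \<partial>M)"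
    by (rule Bochner_Integration.integral_add[OF i2 i3])
  also have "\<dots> \<le> (\<integral>\<omega>. W \<omega> * e \<omega> * c0 \<omega> \<partial>M) + - (\<alpha>/2) * (\<integral>\<omega>. W1 \<omega> * (r t \<omega>)\<^sup>2 \<partial>M)"
    using condX by simp
  also have "\<dots> = (\<integral>\<omega>. W \<omega> * (e \<omega> * (c0 \<omega> + c1 \<omega> * (- (\<alpha>/2) * (r t \<omega>)\<^sup>2))) \<partial>M)"
  proof -
    have "(\<integral>\<omega>. W \<omega> * (e \<omega> * (c0 \<omega> + c1 \<omega> * (- (\<alpha>/2) * (r t \<omega>)\<^sup>2))) \<partial>M)
        = (\<integral>\<omega>. W \<omega> * e \<omega> * c0 \<omega> + (- (\<alpha>/2)) * (W1 \<omega> * (r t \<omega>)\<^sup>2) \<partial>M)"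
      unfolding W1_def by (intro Bochner_Integration.integral_cong refl) (simp add: algebra_simps)
    also have "\<dots> = (\<integral>\<omega>. W \<omega> * e \<omega> * c0 \<omega> \<partial>M) + - (\<alpha>/2) * (\<integral>\<omega>. W1 \<omega> * (r t \<omega>)\<^sup>2 \<partial>M)"
      using i2 i4 by simp
    finally show ?thesis by simp
  qed
  also have "\<dots> \<le> (\<integral>\<omega>. W \<omega> \<partial>M)"
  proof (rule integral_mono)
    show "integrable M W" by (rule int_bounded[OF WM, of B]) (use Wb in force)
    show "integrable M (\<lambda>\<omega>. W \<omega> * (e \<omega> * (c0 \<omega> + c1 \<omega> * (- (\<alpha>/2) * (r t \<omega>)\<^sup>2))))"
    proof -
      have "integrable M (\<lambda>\<omega>. W \<omega> * e \<omega> * c0 \<omega> + (- (\<alpha>/2)) * (W1 \<omega> * (r t \<omega>)\<^sup>2))"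
        using i2 i4 by simp
      moreover have "(\<lambda>\<omega>. W \<omega> * e \<omega> * c0 \<omega> + (- (\<alpha>/2)) * (W1 \<omega> * (r t \<omega>)\<^sup>2))
          = (\<lambda>\<omega>. W \<omega> * (e \<omega> * (c0 \<omega> + c1 \<omega> * (- (\<alpha>/2) * (r t \<omega>)\<^sup>2))))"
        unfolding W1_def by (simp add: fun_eq_iff algebra_simps)
      ultimately show ?thesis by simp
    qed
    fix \<omega> assume om: "\<omega> \<in> space M"
    show "W \<omega> * (e \<omega> * (c0 \<omega> + c1 \<omega> * (- (\<alpha>/2) * (r t \<omega>)\<^sup>2))) \<le> W \<omega>"
      using mult_left_mono[OF F6[OF om], of "W \<omega>"] Wb[OF om] by simp
  qed
  finally show ?thesis .
qed

end

locale L5p = L5 +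
  assumes Lp: "L > 0"
begin

definition "CC = 2 * L * D + \<alpha>/4 * D\<^sup>2"
definition "Zc t \<omega> = max (- CC) (min CC (X t \<omega> + \<alpha>/4 * (r t \<omega>)\<^sup>2))"
definition "Mg n \<omega> = exp (lam * (\<Sum>t\<in>{1..n}. Zc t \<omega>))"

lemma CC_nonneg: "CC \<ge> 0" unfolding CC_def using Lp D_nonneg apos by simp

lemma lam_pos: "lam > 0" unfolding lam_def using apos Lp by simp

lemma Zc_meas: "t \<ge> 1 \<Longrightarrow> Zc t \<in> borel_measurable (F t)"
  unfolding Zc_def using X_meas[of t] meas_F_mono[OF _ r_meas[of t], of t] by measurable

lemma Zc_bound: "\<bar>Zc t \<omega>\<bar> \<le> CC" unfolding Zc_def using CC_nonneg by auto

lemma Zc_eq: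
  assumes t: "t \<ge> 1" and om: "\<omega> \<in> space M" and ls: "lipset t \<omega>"
  shows "Zc t \<omega> = X t \<omega> + \<alpha>/4 * (r t \<omega>)\<^sup>2"
proof -
  have rb: "0 \<le> r t \<omega>" "r t \<omega> \<le> D" using r_bound[OF t om] by auto
  have "\<bar>X t \<omega>\<bar> \<le> 2 * L * r t \<omega>" by (rule X_bound[OF t om ls])
  also have "\<dots> \<le> 2 * L * D" using rb Lp by simp
  finally have x: "\<bar>X t \<omega>\<bar> \<le> 2 * L * D" .
  have "(r t \<omega>)\<^sup>2 \<le> D\<^sup>2" using rb by (intro power_mono) auto
  then have "\<alpha>/4 * (r t \<omega>)\<^sup>2 \<le> \<alpha>/4 * D\<^sup>2" using apos by simp
  moreover have "0 \<le> \<alpha>/4 * (r t \<omega>)\<^sup>2" using apos by simp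
  ultimately have "\<bar>X t \<omega> + \<alpha>/4 * (r t \<omega>)\<^sup>2\<bar> \<le> CC" unfolding CC_def using x by linarith
  then show ?thesis unfolding Zc_def by auto
qed

lemma Mg_meas: "Mg n \<in> borel_measurable (F n)"
proof -
  have "(\<lambda>\<omega>. \<Sum>t\<in>{1..n}. Zc t \<omega>) \<in> borel_measurable (F n)"
  proof (rule borel_measurable_sum)
    fix t assume "t \<in> {1..n}"
    then show "Zc t \<in> borel_measurable (F n)" using meas_F_mono[OF _ Zc_meas[of t], of n] by auto
  qed
  then show ?thesis unfolding Mg_def by measurable
qed

lemma Mg_pos: "Mg n \<omega> > 0" unfolding Mg_def by simp

lemma Mg_bound: "Mg n \<omega> \<le> exp (lam * (real n * CC))"
proof -
  have "(\<Sum>t\<in>{1..n}. Zc t \<omega>) \<le> (\<Sum>t\<in>{1..n}. CC)" by (intro sum_mono) (use Zc_bound abs_le_iff in blast)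
  then have "(\<Sum>t\<in>{1..n}. Zc t \<omega>) \<le> real n * CC" by simp
  then show ?thesis unfolding Mg_def using lam_pos by simp
qed

lemma Mg_0: "Mg 0 \<omega> = 1" unfolding Mg_def by simp

lemma Mg_Suc: "Mg (Suc n) \<omega> = Mg n \<omega> * exp (lam * Zc (Suc n) \<omega>)"
  unfolding Mg_def by (simp add: distrib_left exp_add)

lemma int_ind_Mg: "A \<in> sets M \<Longrightarrow> integrable M (\<lambda>\<omega>. indicator A \<omega> * Mg n \<omega>)"
  by (rule int_bounded[where B="exp (lam * (real n * CC))"])
     (use meas_F_M[OF Mg_meas] Mg_pos Mg_bound in \<open>auto simp: indicator_def less_imp_le\<close>)

lemma super:
  assumes A: "A \<in> sets (F n)"
  shows "(\<integral>\<omega>. indicator A \<omega> * Mg (Suc n) \<omega> \<partial>M) \<le> (\<integral>\<omega>. indicator A \<omega> * Mg n \<omega> \<partial>M)"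
proof -
  define W where "W = (\<lambda>\<omega>. indicator A \<omega> * Mg n \<omega>)"
  have Wm0: "W \<in> borel_measurable (F n)" unfolding W_def using A Mg_meas[of n] by measurable
  have Wm: "W \<in> borel_measurable (F (Suc n - 1))" using Wm0 by simp
  have Wb: "\<omega> \<in> space M \<Longrightarrow> 0 \<le> W \<omega> \<and> W \<omega> \<le> exp (lam * (real n * CC))" for \<omega>
    unfolding W_def using Mg_pos[of n \<omega>] Mg_bound[of n \<omega>] by (auto simp: indicator_def)
  have AM: "A \<in> sets M" using A subalgF unfolding subalgebra_def by blast
  have s1: "1 \<le> Suc n" by simp
  have "(\<integral>\<omega>. indicator A \<omega> * Mg (Suc n) \<omega> \<partial>M) = (\<integral>\<omega>. W \<omega> * exp (lam * (X (Suc n) \<omega> + \<alpha>/4 * (r (Suc n) \<omega>)\<^sup>2)) \<partial>M)"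
  proof (rule integral_cong_AE)
    show "(\<lambda>\<omega>. indicator A \<omega> * Mg (Suc n) \<omega>) \<in> borel_measurable M"
      using AM meas_F_M[OF Mg_meas] by measurable
    show "(\<lambda>\<omega>. W \<omega> * exp (lam * (X (Suc n) \<omega> + \<alpha>/4 * (r (Suc n) \<omega>)\<^sup>2))) \<in> borel_measurable M"
      using meas_F_M[OF Wm] meas_F_M[OF X_meas[of "Suc n"]] meas_F_M[OF r_meas[of "Suc n"]] by measurable
    show "AE \<omega> in M. indicator A \<omega> * Mg (Suc n) \<omega> = W \<omega> * exp (lam * (X (Suc n) \<omega> + \<alpha>/4 * (r (Suc n) \<omega>)\<^sup>2))"
      using lipset_AE[OF s1]
    proof (rule AE_mp, intro AE_I2 impI)
      fix \<omega> assume om: "\<omega> \<in> space M" and ls: "lipset (Suc n) \<omega>"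
      show "indicator A \<omega> * Mg (Suc n) \<omega> = W \<omega> * exp (lam * (X (Suc n) \<omega> + \<alpha>/4 * (r (Suc n) \<omega>)\<^sup>2))"
        unfolding W_def Mg_Suc Zc_eq[OF _ om ls, simplified] by simp
    qed
  qed
  also have "\<dots> \<le> (\<integral>\<omega>. W \<omega> \<partial>M)"
    by (rule step[OF _ Lp Wm Wb]) simp
  finally show ?thesis unfolding W_def .
qed

lemma set_meas: "A \<in> sets M \<Longrightarrow> {\<omega> \<in> A. \<exists>j\<in>{k..k+n}. c \<le> Mg j \<omega>} \<in> sets M"
proof -
  assume A: "A \<in> sets M"
  have "{\<omega> \<in> A. \<exists>j\<in>{k..k+n}. c \<le> Mg j \<omega>} = A \<inter> (\<Union>j\<in>{k..k+n}. {\<omega> \<in> space M. c \<le> Mg j \<omega>})"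
    using sets.sets_into_space[OF A] by auto
  also have "\<dots> \<in> sets M"
    using A meas_F_M[OF Mg_meas] by (intro sets.Int sets.finite_UN) auto
  finally show ?thesis .
qed

lemma markov_part:
  assumes A: "A \<in> sets M" and c: "c > 0"
  shows "c * measure M {\<omega> \<in> A. c \<le> Mg k \<omega>} \<le> (\<integral>\<omega>. indicator {\<omega> \<in> A. c \<le> Mg k \<omega>} \<omega> * Mg k \<omega> \<partial>M)"
proof -
  have S: "{\<omega> \<in> A. c \<le> Mg k \<omega>} \<in> sets M" using set_meas[OF A, of k 0 c] by simp
  have Ssp: "{\<omega> \<in> A. c \<le> Mg k \<omega>} \<inter> space M = {\<omega> \<in> A. c \<le> Mg k \<omega>}" using sets.sets_into_space[OF S] by auto
  have "c * measure M {\<omega> \<in> A. c \<le> Mg k \<omega>} = c * (\<integral>\<omega>. indicator {\<omega> \<in> A. c \<le> Mg k \<omega>} \<omega> \<partial>M)"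
    using Ssp by simp
  also have "\<dots> = (\<integral>\<omega>. c * indicator {\<omega> \<in> A. c \<le> Mg k \<omega>} \<omega> \<partial>M)" by simp
  also have "\<dots> \<le> (\<integral>\<omega>. indicator {\<omega> \<in> A. c \<le> Mg k \<omega>} \<omega> * Mg k \<omega> \<partial>M)"
  proof (rule integral_mono[OF _ int_ind_Mg[OF S]])
    show "integrable M (\<lambda>\<omega>. c * indicator {\<omega> \<in> A. c \<le> Mg k \<omega>} \<omega>)"
      using S by (intro integrable_mult_right integrable_real_indicator) (auto simp: less_top[symmetric])
  qed (auto simp: indicator_def)
  finally show ?thesis .
qed

lemma ville_aux:
  assumes c: "c > 0"
  shows "A \<in> sets (F k) \<Longrightarrow> c * measure M {\<omega> \<in> A. \<exists>j\<in>{k..k+n}. c \<le> Mg j \<omega>} \<le> (\<integral>\<omega>. indicator A \<omega> * Mg k \<omega> \<partial>M)"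
proof (induction n arbitrary: k A)
  case 0
  have AM: "A \<in> sets M" using 0 subalgF unfolding subalgebra_def by blast
  have S: "{\<omega> \<in> A. c \<le> Mg k \<omega>} \<in> sets M" using set_meas[OF AM, of k 0 c] by simp
  have "c * measure M {\<omega> \<in> A. \<exists>j\<in>{k..k+0}. c \<le> Mg j \<omega>} = c * measure M {\<omega> \<in> A. c \<le> Mg k \<omega>}" by simp
  also have "\<dots> \<le> (\<integral>\<omega>. indicator {\<omega> \<in> A. c \<le> Mg k \<omega>} \<omega> * Mg k \<omega> \<partial>M)" by (rule markov_part[OF AM c])
  also have "\<dots> \<le> (\<integral>\<omega>. indicator A \<omega> * Mg k \<omega> \<partial>M)"
    by (rule integral_mono[OF int_ind_Mg[OF S] int_ind_Mg[OF AM]]) (auto simp: indicator_def less_imp_le Mg_pos)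
  finally show ?case .
next
  case (Suc n)
  have AM: "A \<in> sets M" using Suc.prems subalgF unfolding subalgebra_def by blast
  define S0 where "S0 = {\<omega> \<in> A. c \<le> Mg k \<omega>}"
  define A' where "A' = {\<omega> \<in> A. Mg k \<omega> < c}"
  have A'F: "A' \<in> sets (F k)"
  proof -
    have "A' = A \<inter> {\<omega> \<in> space (F k). Mg k \<omega> < c}" unfolding A'_def using sets.sets_into_space[OF Suc.prems] by auto
    also have "\<dots> \<in> sets (F k)" using Suc.prems Mg_meas[of k] by measurable
    finally show ?thesis .
  qed
  have A'F1: "A' \<in> sets (F (Suc k))" using A'F F_mono[of k "Suc k"] by auto
  have A'M: "A' \<in> sets M" using A'F subalgF unfolding subalgebra_def by blast
  have S0M: "S0 \<in> sets M" unfolding S0_def using set_meas[OF AM, of k 0 c] by simp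
  define S1 where "S1 = {\<omega> \<in> A'. \<exists>j\<in>{Suc k..Suc k+n}. c \<le> Mg j \<omega>}"
  have S1M: "S1 \<in> sets M" unfolding S1_def by (rule set_meas[OF A'M])
  have sub: "{\<omega> \<in> A. \<exists>j\<in>{k..k+Suc n}. c \<le> Mg j \<omega>} \<subseteq> S0 \<union> S1"
  proof
    fix \<omega> assume "\<omega> \<in> {\<omega> \<in> A. \<exists>j\<in>{k..k+Suc n}. c \<le> Mg j \<omega>}"
    then obtain j where j: "\<omega> \<in> A" "j \<in> {k..k+Suc n}" "c \<le> Mg j \<omega>" by auto
    show "\<omega> \<in> S0 \<union> S1"
    proof (cases "c \<le> Mg k \<omega>")
      case True then show ?thesis using j unfolding S0_def by auto
    next
      case False
      then have "j \<noteq> k" using j by auto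
      then have "j \<in> {Suc k..Suc k+n}" using j by auto
      then show ?thesis using j False unfolding S1_def A'_def by auto
    qed
  qed
  have "c * measure M {\<omega> \<in> A. \<exists>j\<in>{k..k+Suc n}. c \<le> Mg j \<omega>} \<le> c * measure M (S0 \<union> S1)"
    using c sub S0M S1M by (intro mult_left_mono finite_measure_mono) auto
  also have "\<dots> \<le> c * measure M S0 + c * measure M S1"
    using measure_Un_le[OF S0M S1M] c by (simp add: distrib_left[symmetric])
  also have "c * measure M S0 \<le> (\<integral>\<omega>. indicator S0 \<omega> * Mg k \<omega> \<partial>M)"
    unfolding S0_def by (rule markov_part[OF AM c])
  also have "c * measure M S1 \<le> (\<integral>\<omega>. indicator A' \<omega> * Mg (Suc k) \<omega> \<partial>M)"
    unfolding S1_def using Suc.IH[OF A'F1] by simp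
  also have "\<dots> \<le> (\<integral>\<omega>. indicator A' \<omega> * Mg k \<omega> \<partial>M)" by (rule super[OF A'F])
  also have "(\<integral>\<omega>. indicator S0 \<omega> * Mg k \<omega> \<partial>M) + (\<integral>\<omega>. indicator A' \<omega> * Mg k \<omega> \<partial>M)
      = (\<integral>\<omega>. indicator S0 \<omega> * Mg k \<omega> + indicator A' \<omega> * Mg k \<omega> \<partial>M)"
    using int_ind_Mg[OF S0M] int_ind_Mg[OF A'M] by simp
  also have "\<dots> = (\<integral>\<omega>. indicator A \<omega> * Mg k \<omega> \<partial>M)"
    by (intro Bochner_Integration.integral_cong refl) (auto simp: indicator_def S0_def A'_def)
  finally show ?case by simp
qed

lemma ville_n:
  assumes c: "c > 0"
  shows "measure M {\<omega> \<in> space M. \<exists>j\<in>{0..n}. c \<le> Mg j \<omega>} \<le> 1 / c"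
proof -
  have "c * measure M {\<omega> \<in> space M. \<exists>j\<in>{0..0+n}. c \<le> Mg j \<omega>} \<le> (\<integral>\<omega>. indicator (space M) \<omega> * Mg 0 \<omega> \<partial>M)"
    by (rule ville_aux[OF c]) (use sets.top[of "F 0"] space_F[of 0] in simp)
  also have "\<dots> = 1" by (simp add: Mg_0 prob_space)
  finally show ?thesis using c by (simp add: field_simps)
qed

lemma ville:
  assumes c: "c > 0"
  shows "{\<omega> \<in> space M. \<exists>j. c \<le> Mg j \<omega>} \<in> sets M" "measure M {\<omega> \<in> space M. \<exists>j. c \<le> Mg j \<omega>} \<le> 1 / c"
proof -
  define Bn where "Bn = (\<lambda>n. {\<omega> \<in> space M. \<exists>j\<in>{0..n}. c \<le> Mg j \<omega>})"
  have BnM: "Bn n \<in> sets M" for n unfolding Bn_def using set_meas[OF sets.top, of 0 n c] by simp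
  have inc: "incseq Bn" unfolding Bn_def incseq_def by fastforce
  have U: "(\<Union>n. Bn n) = {\<omega> \<in> space M. \<exists>j. c \<le> Mg j \<omega>}" unfolding Bn_def by fastforce
  show "{\<omega> \<in> space M. \<exists>j. c \<le> Mg j \<omega>} \<in> sets M" unfolding U[symmetric] using BnM by auto
  have "(\<lambda>n. measure M (Bn n)) \<longlonglongrightarrow> measure M (\<Union>n. Bn n)"
    by (rule finite_Lim_measure_incseq) (use BnM inc in auto)
  moreover have "measure M (Bn n) \<le> 1 / c" for n unfolding Bn_def by (rule ville_n[OF c])
  ultimately have "measure M (\<Union>n. Bn n) \<le> 1 / c" by (intro LIMSEQ_le_const2) auto
  then show "measure M {\<omega> \<in> space M. \<exists>j. c \<le> Mg j \<omega>} \<le> 1 / c" unfolding U .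
qed

lemma main_pos:
  assumes d0: "0 < \<delta>" and d1: "\<delta> < 1"
  shows "\<exists>A\<in>sets M. measure M A \<ge> 1 - \<delta> \<and>
           (\<forall>\<omega>\<in>A. \<forall>T::nat.
              (\<Sum>t=1..T. f t \<omega> (w t \<omega>) - f t \<omega> (u \<omega>))
                \<le> (\<Sum>t=1..T. (w t \<omega> - u \<omega>) \<bullet> grad t \<omega> (w t \<omega>)
                               - \<alpha> / 4 * (N (w t \<omega> - u \<omega>))\<^sup>2)
                  + 8 * L\<^sup>2 * ln (1 / \<delta>) / \<alpha>)"
proof -
  define c where "c = 1 / \<delta>"
  have c0: "c > 0" unfolding c_def using d0 by simp
  have "AE \<omega> in M. \<forall>t. 1 \<le> t \<longrightarrow> lipset t \<omega>"
    unfolding AE_all_countable using lipset_AE by auto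
  then obtain N0 where N0: "{\<omega> \<in> space M. \<not> (\<forall>t. 1 \<le> t \<longrightarrow> lipset t \<omega>)} \<subseteq> N0" "emeasure M N0 = 0" "N0 \<in> sets M"
    by (rule AE_E)
  define Bad where "Bad = {\<omega> \<in> space M. \<exists>j. c \<le> Mg j \<omega>}"
  have BadM: "Bad \<in> sets M" and Badm: "measure M Bad \<le> 1 / c" unfolding Bad_def using ville[OF c0] by auto
  define A where "A = space M - (N0 \<union> Bad)"
  have AM: "A \<in> sets M" unfolding A_def using N0(3) BadM by auto
  have mN0: "measure M N0 = 0" using N0(2) by (simp add: measure_def)
  have "measure M A = 1 - measure M (N0 \<union> Bad)"
    unfolding A_def using finite_measure_compl[of "N0 \<union> Bad"] N0(3) BadM prob_space by auto
  also have "measure M (N0 \<union> Bad) \<le> measure M N0 + measure M Bad" by (rule measure_Un_le[OF N0(3) BadM])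
  then have "1 - measure M (N0 \<union> Bad) \<ge> 1 - \<delta>" using mN0 Badm unfolding c_def using d0 by simp
  finally have mA: "measure M A \<ge> 1 - \<delta>" by simp
  have bound: "(\<Sum>t=1..T. f t \<omega> (w t \<omega>) - f t \<omega> (u \<omega>))
                \<le> (\<Sum>t=1..T. (w t \<omega> - u \<omega>) \<bullet> grad t \<omega> (w t \<omega>)
                               - \<alpha> / 4 * (N (w t \<omega> - u \<omega>))\<^sup>2)
                  + 8 * L\<^sup>2 * ln (1 / \<delta>) / \<alpha>" if om: "\<omega> \<in> A" for \<omega> T
  proof -
    have osp: "\<omega> \<in> space M" and nN: "\<omega> \<notin> N0" and nB: "\<omega> \<notin> Bad" using om unfolding A_def by auto
    have ls: "lipset t \<omega>" if "1 \<le> t" for t using N0(1) osp nN that by blast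
    have "Mg T \<omega> < c" using nB osp unfolding Bad_def by (auto simp: not_le)
    then have "lam * (\<Sum>t\<in>{1..T}. Zc t \<omega>) < ln c" unfolding Mg_def using c0 by (metis exp_less_cancel_iff exp_ln)
    moreover have "(\<Sum>t\<in>{1..T}. Zc t \<omega>) = (\<Sum>t\<in>{1..T}. X t \<omega> + \<alpha>/4 * (r t \<omega>)\<^sup>2)"
      by (intro sum.cong refl Zc_eq[OF _ osp ls]) auto
    ultimately have "(\<Sum>t\<in>{1..T}. X t \<omega> + \<alpha>/4 * (r t \<omega>)\<^sup>2) < ln c / lam"
      using lam_pos by (simp add: field_simps)
    also have "ln c / lam = 8 * L\<^sup>2 * ln (1 / \<delta>) / \<alpha>"
      unfolding c_def lam_def using apos Lp by (simp add: field_simps)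
    finally have lt: "(\<Sum>t\<in>{1..T}. X t \<omega> + \<alpha>/4 * (r t \<omega>)\<^sup>2) < 8 * L\<^sup>2 * ln (1 / \<delta>) / \<alpha>" .
    have "(\<Sum>t=1..T. f t \<omega> (w t \<omega>) - f t \<omega> (u \<omega>))
          - (\<Sum>t=1..T. (w t \<omega> - u \<omega>) \<bullet> grad t \<omega> (w t \<omega>) - \<alpha> / 4 * (N (w t \<omega> - u \<omega>))\<^sup>2)
        = (\<Sum>t\<in>{1..T}. X t \<omega> + \<alpha>/4 * (r t \<omega>)\<^sup>2)"
      unfolding sum_subtractf[symmetric] by (intro sum.cong refl) (simp add: X_def r_def)
    then show ?thesis using lt by linarith
  qed
  show ?thesis using AM mA bound by blast
qed

end

context L5
begin

lemma main_nonpos: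
  assumes Ln: "\<not> L > 0" and d0: "0 < \<delta>" and d1: "\<delta> < 1"
  shows "\<exists>A\<in>sets M. measure M A \<ge> 1 - \<delta> \<and>
           (\<forall>\<omega>\<in>A. \<forall>T::nat.
              (\<Sum>t=1..T. f t \<omega> (w t \<omega>) - f t \<omega> (u \<omega>))
                \<le> (\<Sum>t=1..T. (w t \<omega> - u \<omega>) \<bullet> grad t \<omega> (w t \<omega>)
                               - \<alpha> / 4 * (N (w t \<omega> - u \<omega>))\<^sup>2)
                  + 8 * L\<^sup>2 * ln (1 / \<delta>) / \<alpha>)"
proof (intro bexI conjI ballI allI)
  show "space M \<in> sets M" by simp
  show "measure M (space M) \<ge> 1 - \<delta>" using d0 by (simp add: prob_space)
  fix \<omega> T assume om: "\<omega> \<in> space M"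
  have eq: "w t \<omega> = u \<omega>" if "t \<in> {1..T}" for t
    using L_pos_if[OF wH[OF _ om] uH[OF om]] Ln that by auto
  have "(\<Sum>t=1..T. f t \<omega> (w t \<omega>) - f t \<omega> (u \<omega>)) = 0" using eq by simp
  moreover have "(\<Sum>t=1..T. (w t \<omega> - u \<omega>) \<bullet> grad t \<omega> (w t \<omega>) - \<alpha> / 4 * (N (w t \<omega> - u \<omega>))\<^sup>2) = 0"
    using eq by simp
  moreover have "0 \<le> 8 * L\<^sup>2 * ln (1 / \<delta>) / \<alpha>" using d0 d1 apos by simp
  ultimately show "(\<Sum>t=1..T. f t \<omega> (w t \<omega>) - f t \<omega> (u \<omega>))
                \<le> (\<Sum>t=1..T. (w t \<omega> - u \<omega>) \<bullet> grad t \<omega> (w t \<omega>)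
                               - \<alpha> / 4 * (N (w t \<omega> - u \<omega>))\<^sup>2)
                  + 8 * L\<^sup>2 * ln (1 / \<delta>) / \<alpha>" by simp
qed

end

theorem lemma5:
  fixes M :: "'a measure"
    and F :: "nat \<Rightarrow> 'a measure"
    and H :: "(real ^ 'd) set"
    and N :: "real ^ 'd \<Rightarrow> real"
    and f :: "nat \<Rightarrow> 'a \<Rightarrow> real ^ 'd \<Rightarrow> real"
    and grad :: "nat \<Rightarrow> 'a \<Rightarrow> real ^ 'd \<Rightarrow> real ^ 'd"
    and u :: "'a \<Rightarrow> real ^ 'd"
    and w :: "nat \<Rightarrow> 'a \<Rightarrow> real ^ 'd"
    and \<alpha> L \<delta> :: real
  assumes "prob_space M"
    and "is_filtration M F"
    and "convex H"
    and "is_norm N"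
    and "\<alpha> > 0"
    \<comment> \<open>each f t is (pathwise) differentiable, with gradient grad t\<close>
    and "\<And>t \<omega> x. t \<ge> 1 \<Longrightarrow> \<omega> \<in> space M \<Longrightarrow>
           (f t \<omega> has_derivative (\<lambda>h. grad t \<omega> x \<bullet> h)) (at x)"
    \<comment> \<open>(1) u, w t are random points of H, measurable w.r.t. F 0 and F (t-1)\<close>
    and "u \<in> borel_measurable (F 0)"
    and "\<And>\<omega>. \<omega> \<in> space M \<Longrightarrow> u \<omega> \<in> H"
    and "\<And>t. t \<ge> 1 \<Longrightarrow> w t \<in> borel_measurable (F (t - 1))"
    and "\<And>t \<omega>. t \<ge> 1 \<Longrightarrow> \<omega> \<in> space M \<Longrightarrow> w t \<omega> \<in> H"
    \<comment> \<open>(2) f t is F t-measurable and integrable, and (a version of) E[f t | F (t-1)]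
        is alpha-strongly convex w.r.t. N almost surely\<close>
    and "\<And>t x. t \<ge> 1 \<Longrightarrow> (\<lambda>\<omega>. f t \<omega> x) \<in> borel_measurable (F t)"
    and "\<And>t x. t \<ge> 1 \<Longrightarrow> x \<in> H \<Longrightarrow> integrable M (\<lambda>\<omega>. f t \<omega> x)"
    and "\<And>t. t \<ge> 1 \<Longrightarrow> \<exists>g :: 'a \<Rightarrow> real ^ 'd \<Rightarrow> real.
           (\<forall>x\<in>H. (\<lambda>\<omega>. g \<omega> x) \<in> borel_measurable (F (t - 1))
                 \<and> (AE \<omega> in M. g \<omega> x = real_cond_exp M (F (t - 1)) (\<lambda>\<omega>'. f t \<omega>' x) \<omega>))
           \<and> (AE \<omega> in M. strongly_convex_wrt H \<alpha> N (g \<omega>))"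
    \<comment> \<open>(3) f t is almost surely L-Lipschitz w.r.t. N on H\<close>
    and "\<And>t. t \<ge> 1 \<Longrightarrow> AE \<omega> in M. \<forall>x\<in>H. \<forall>y\<in>H. \<bar>f t \<omega> x - f t \<omega> y\<bar> \<le> L * N (x - y)"
    and "0 < \<delta>" and "\<delta> < 1"
  shows "\<exists>A\<in>sets M. measure M A \<ge> 1 - \<delta> \<and>
           (\<forall>\<omega>\<in>A. \<forall>T::nat.
              (\<Sum>t=1..T. f t \<omega> (w t \<omega>) - f t \<omega> (u \<omega>))
                \<le> (\<Sum>t=1..T. (w t \<omega> - u \<omega>) \<bullet> grad t \<omega> (w t \<omega>)
                               - \<alpha> / 4 * (N (w t \<omega> - u \<omega>))\<^sup>2)
                  + 8 * L\<^sup>2 * ln (1 / \<delta>) / \<alpha>)"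
proof -
  have "L5 M F H N f grad u w \<alpha> L"
    by (intro L5.intro L5_axioms.intro) (fact assms)+
  then interpret L5 M F H N f grad u w \<alpha> L .
  show ?thesis
  proof (cases "L > 0")
    case True
    have "L5p M F H N f grad u w \<alpha> L"
      by (intro L5p.intro L5p_axioms.intro) (fact, fact True)
    then interpret L5p M F H N f grad u w \<alpha> L .
    show ?thesis by (rule main_pos[OF assms(15,16)])
  next
    case False
    show ?thesis by (rule main_nonpos[OF False assms(15,16)])
  qed
qed

end
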